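(* Let $\mathcal G$ be a groupoid and let $\{\mathcal{G}_i\}_{i\in I}$ be its homogeneous components. Then there is an isomorphism of 2-groups $\mathbb{S}ym(\mathcal{G})\cong\prod_{i\in I}\mathbb{S}ym(\mathcal{G}_i)$, given by sending a self-equivalence (resp. natural isomorphism) to the family of its restrictions to the homogeneous components.
   Context: A homogeneous component of a groupoid $\mathcal G$ is the full subgroupoid formed by the union of all connected components of $\mathcal G$ whose objects have automorphism group isomorphic to a given group; $\mathcal G$ is the disjoint union of its homogeneous components. A 2-group is a monoidal groupoid in which every object has a weak tensor inverse; an isomorphism of 2-groups is a monoidal functor with a strict inverse monoidal functor. For a groupoid $\mathcal K$, $\mathbb{S}ym(\mathcal{K})$ is the 2-group whose objects are self-equivalences of $\mathcal K$ and whose morphisms are natural isomorphisms between them, with tensor product given by composition and horizontal composition. The product of 2-groups is the product groupoid with componentwise monoidal structure. *)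

theory Defs
  imports "HOL-Algebra.Group"
begin

text \<open>gComp G g f is the composite "g after f" (defined when gCod G f = gDom G g).\<close>

record ('o, 'm) gpd =
  gObj  :: "'o set"
  gArr  :: "'m set"
  gDom  :: "'m \<Rightarrow> 'o"
  gCod  :: "'m \<Rightarrow> 'o"
  gComp :: "'m \<Rightarrow> 'm \<Rightarrow> 'm"
  gId   :: "'o \<Rightarrow> 'm"

definition hom :: "('o, 'm, 'x) gpd_scheme \<Rightarrow> 'o \<Rightarrow> 'o \<Rightarrow> 'm set" where
  "hom G a b = {f \<in> gArr G. gDom G f = a \<and> gCod G f = b}"

definition groupoid :: "('o, 'm, 'x) gpd_scheme \<Rightarrow> bool" where
  "groupoid G \<longleftrightarrow>
     (\<forall>f\<in>gArr G. gDom G f \<in> gObj G \<and> gCod G f \<in> gObj G) \<and>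
     (\<forall>a\<in>gObj G. gId G a \<in> hom G a a) \<and>
     (\<forall>f\<in>gArr G. \<forall>g\<in>gArr G. gCod G f = gDom G g \<longrightarrow>
         gComp G g f \<in> hom G (gDom G f) (gCod G g)) \<and>
     (\<forall>f\<in>gArr G. \<forall>g\<in>gArr G. \<forall>h\<in>gArr G. gCod G f = gDom G g \<longrightarrow> gCod G g = gDom G h \<longrightarrow>
         gComp G h (gComp G g f) = gComp G (gComp G h g) f) \<and>
     (\<forall>f\<in>gArr G. gComp G f (gId G (gDom G f)) = f \<and> gComp G (gId G (gCod G f)) f = f) \<and>
     (\<forall>f\<in>gArr G. \<exists>g\<in>hom G (gCod G f) (gDom G f).
         gComp G g f = gId G (gDom G f) \<and> gComp G f g = gId G (gCod G f))"

text \<open>Functors are pairs (object map, arrow map), extensional outside the source groupoid.\<close>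

definition gfunctor ::
  "('a, 'b, 'x) gpd_scheme \<Rightarrow> ('c, 'd, 'y) gpd_scheme \<Rightarrow> ('a \<Rightarrow> 'c) \<times> ('b \<Rightarrow> 'd) \<Rightarrow> bool" where
  "gfunctor G H F \<longleftrightarrow>
     fst F \<in> extensional (gObj G) \<and> snd F \<in> extensional (gArr G) \<and>
     (\<forall>a\<in>gObj G. fst F a \<in> gObj H) \<and>
     (\<forall>f\<in>gArr G. snd F f \<in> hom H (fst F (gDom G f)) (fst F (gCod G f))) \<and>
     (\<forall>f\<in>gArr G. \<forall>g\<in>gArr G. gCod G f = gDom G g \<longrightarrow>
         snd F (gComp G g f) = gComp H (snd F g) (snd F f)) \<and>
     (\<forall>a\<in>gObj G. snd F (gId G a) = gId H (fst F a))"

definition nat_trans ::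
  "('a, 'b, 'x) gpd_scheme \<Rightarrow> ('c, 'd, 'y) gpd_scheme \<Rightarrow>
   ('a \<Rightarrow> 'c) \<times> ('b \<Rightarrow> 'd) \<Rightarrow> ('a \<Rightarrow> 'c) \<times> ('b \<Rightarrow> 'd) \<Rightarrow> ('a \<Rightarrow> 'd) \<Rightarrow> bool" where
  "nat_trans G H F F' \<eta> \<longleftrightarrow>
     \<eta> \<in> extensional (gObj G) \<and>
     (\<forall>a\<in>gObj G. \<eta> a \<in> hom H (fst F a) (fst F' a)) \<and>
     (\<forall>f\<in>gArr G. gComp H (\<eta> (gCod G f)) (snd F f) = gComp H (snd F' f) (\<eta> (gDom G f)))"

definition id_functor :: "('a, 'b, 'x) gpd_scheme \<Rightarrow> ('a \<Rightarrow> 'a) \<times> ('b \<Rightarrow> 'b)" where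
  "id_functor G = ((\<lambda>a\<in>gObj G. a), (\<lambda>f\<in>gArr G. f))"

definition comp_functor ::
  "('a, 'b, 'x) gpd_scheme \<Rightarrow> ('a \<Rightarrow> 'a) \<times> ('b \<Rightarrow> 'b) \<Rightarrow> ('a \<Rightarrow> 'a) \<times> ('b \<Rightarrow> 'b)
     \<Rightarrow> ('a \<Rightarrow> 'a) \<times> ('b \<Rightarrow> 'b)" where
  "comp_functor G F K = ((\<lambda>a\<in>gObj G. fst F (fst K a)), (\<lambda>f\<in>gArr G. snd F (snd K f)))"

text \<open>Self-equivalence: an endofunctor with a quasi-inverse (natural transformations between
  functors into a groupoid are automatically natural isomorphisms).\<close>
definition self_equiv :: "('a, 'b, 'x) gpd_scheme \<Rightarrow> ('a \<Rightarrow> 'a) \<times> ('b \<Rightarrow> 'b) \<Rightarrow> bool" where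
  "self_equiv G F \<longleftrightarrow> gfunctor G G F \<and>
     (\<exists>K. gfunctor G G K \<and>
        (\<exists>\<eta>. nat_trans G G (comp_functor G K F) (id_functor G) \<eta>) \<and>
        (\<exists>\<theta>. nat_trans G G (comp_functor G F K) (id_functor G) \<theta>))"

record ('a, 'b) mgpd = "('a, 'b) gpd" +
  tens_o  :: "'a \<Rightarrow> 'a \<Rightarrow> 'a"
  tens_m  :: "'b \<Rightarrow> 'b \<Rightarrow> 'b"
  unit_o  :: "'a"
  assoc_m :: "'a \<Rightarrow> 'a \<Rightarrow> 'a \<Rightarrow> 'b"
  lunit_m :: "'a \<Rightarrow> 'b"
  runit_m :: "'a \<Rightarrow> 'b"

definition monoidal_groupoid :: "('a, 'b) mgpd \<Rightarrow> bool" where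
  "monoidal_groupoid M \<longleftrightarrow>
   (let Ob = gObj M; A = gArr M; dom = gDom M; cod = gCod M; c = gComp M; i = gId M;
        t = tens_o M; tm = tens_m M; u = unit_o M; as = assoc_m M; lu = lunit_m M; ru = runit_m M
    in groupoid M \<and>
     (\<forall>a\<in>Ob. \<forall>b\<in>Ob. t a b \<in> Ob) \<and>
     (\<forall>f\<in>A. \<forall>g\<in>A. tm f g \<in> hom M (t (dom f) (dom g)) (t (cod f) (cod g))) \<and>
     (\<forall>f\<in>A. \<forall>f'\<in>A. \<forall>g\<in>A. \<forall>g'\<in>A. cod f = dom f' \<longrightarrow> cod g = dom g' \<longrightarrow>
         tm (c f' f) (c g' g) = c (tm f' g') (tm f g)) \<and>
     (\<forall>a\<in>Ob. \<forall>b\<in>Ob. tm (i a) (i b) = i (t a b)) \<and>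
     u \<in> Ob \<and>
     (\<forall>a\<in>Ob. \<forall>b\<in>Ob. \<forall>d\<in>Ob. as a b d \<in> hom M (t (t a b) d) (t a (t b d))) \<and>
     (\<forall>a\<in>Ob. lu a \<in> hom M (t u a) a \<and> ru a \<in> hom M (t a u) a) \<and>
     (\<forall>f\<in>A. \<forall>g\<in>A. \<forall>h\<in>A.
         c (as (cod f) (cod g) (cod h)) (tm (tm f g) h) = c (tm f (tm g h)) (as (dom f) (dom g) (dom h))) \<and>
     (\<forall>f\<in>A. c (lu (cod f)) (tm (i u) f) = c f (lu (dom f))) \<and>
     (\<forall>f\<in>A. c (ru (cod f)) (tm f (i u)) = c f (ru (dom f))) \<and>
     (\<forall>a\<in>Ob. \<forall>b\<in>Ob. \<forall>d\<in>Ob. \<forall>e\<in>Ob.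
         c (tm (i a) (as b d e)) (c (as a (t b d) e) (tm (as a b d) (i e)))
           = c (as a b (t d e)) (as (t a b) d e)) \<and>
     (\<forall>a\<in>Ob. \<forall>b\<in>Ob. c (tm (i a) (lu b)) (as a u b) = tm (ru a) (i b)))"

definition two_group :: "('a, 'b) mgpd \<Rightarrow> bool" where
  "two_group M \<longleftrightarrow> monoidal_groupoid M \<and>
     (\<forall>a\<in>gObj M. \<exists>b\<in>gObj M. hom M (tens_o M a b) (unit_o M) \<noteq> {} \<and>
                                  hom M (tens_o M b a) (unit_o M) \<noteq> {})"

definition monoidal_functor ::
  "('a, 'b) mgpd \<Rightarrow> ('c, 'd) mgpd \<Rightarrow> ('a \<Rightarrow> 'c) \<times> ('b \<Rightarrow> 'd) \<Rightarrow> ('a \<Rightarrow> 'a \<Rightarrow> 'd) \<Rightarrow> 'd \<Rightarrow> bool" where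
  "monoidal_functor M N F F2 F0 \<longleftrightarrow>
   (let Fo = fst F; Fm = snd F; c = gComp N; i = gId N; t = tens_o N; tm = tens_m N
    in gfunctor M N F \<and>
     (\<forall>a\<in>gObj M. \<forall>b\<in>gObj M. F2 a b \<in> hom N (t (Fo a) (Fo b)) (Fo (tens_o M a b))) \<and>
     F0 \<in> hom N (unit_o N) (Fo (unit_o M)) \<and>
     (\<forall>f\<in>gArr M. \<forall>g\<in>gArr M.
        c (F2 (gCod M f) (gCod M g)) (tm (Fm f) (Fm g))
          = c (Fm (tens_m M f g)) (F2 (gDom M f) (gDom M g))) \<and>
     (\<forall>a\<in>gObj M. \<forall>b\<in>gObj M. \<forall>e\<in>gObj M.
        c (Fm (assoc_m M a b e)) (c (F2 (tens_o M a b) e) (tm (F2 a b) (i (Fo e))))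
          = c (F2 a (tens_o M b e)) (c (tm (i (Fo a)) (F2 b e)) (assoc_m N (Fo a) (Fo b) (Fo e)))) \<and>
     (\<forall>a\<in>gObj M.
        c (Fm (lunit_m M a)) (c (F2 (unit_o M) a) (tm F0 (i (Fo a)))) = lunit_m N (Fo a)) \<and>
     (\<forall>a\<in>gObj M.
        c (Fm (runit_m M a)) (c (F2 a (unit_o M)) (tm (i (Fo a)) F0)) = runit_m N (Fo a)))"

definition two_group_iso ::
  "('a, 'b) mgpd \<Rightarrow> ('c, 'd) mgpd \<Rightarrow> ('a \<Rightarrow> 'c) \<times> ('b \<Rightarrow> 'd) \<Rightarrow> ('a \<Rightarrow> 'a \<Rightarrow> 'd) \<Rightarrow> 'd \<Rightarrow> bool" where
  "two_group_iso M N F F2 F0 \<longleftrightarrow> two_group M \<and> two_group N \<and> monoidal_functor M N F F2 F0 \<and>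
     (\<exists>K K2 K0. monoidal_functor N M K K2 K0 \<and>
        (\<forall>a\<in>gObj M. fst K (fst F a) = a) \<and> (\<forall>f\<in>gArr M. snd K (snd F f) = f) \<and>
        (\<forall>b\<in>gObj N. fst F (fst K b) = b) \<and> (\<forall>g\<in>gArr N. snd F (snd K g) = g))"

definition prod_mgpd :: "'i set \<Rightarrow> ('i \<Rightarrow> ('a, 'b) mgpd) \<Rightarrow> ('i \<Rightarrow> 'a, 'i \<Rightarrow> 'b) mgpd" where
  "prod_mgpd I M =
    \<lparr> gObj = (\<Pi>\<^sub>E i\<in>I. gObj (M i)),
      gArr = (\<Pi>\<^sub>E i\<in>I. gArr (M i)),
      gDom = (\<lambda>f. \<lambda>i\<in>I. gDom (M i) (f i)),
      gCod = (\<lambda>f. \<lambda>i\<in>I. gCod (M i) (f i)),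
      gComp = (\<lambda>g f. \<lambda>i\<in>I. gComp (M i) (g i) (f i)),
      gId = (\<lambda>a. \<lambda>i\<in>I. gId (M i) (a i)),
      tens_o = (\<lambda>a b. \<lambda>i\<in>I. tens_o (M i) (a i) (b i)),
      tens_m = (\<lambda>f g. \<lambda>i\<in>I. tens_m (M i) (f i) (g i)),
      unit_o = (\<lambda>i\<in>I. unit_o (M i)),
      assoc_m = (\<lambda>a b d. \<lambda>i\<in>I. assoc_m (M i) (a i) (b i) (d i)),
      lunit_m = (\<lambda>a. \<lambda>i\<in>I. lunit_m (M i) (a i)),
      runit_m = (\<lambda>a. \<lambda>i\<in>I. runit_m (M i) (a i)) \<rparr>"

type_synonym ('o, 'm) sobj = "('o \<Rightarrow> 'o) \<times> ('m \<Rightarrow> 'm)"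
type_synonym ('o, 'm) smor = "(('o, 'm) sobj \<times> ('o, 'm) sobj) \<times> ('o \<Rightarrow> 'm)"

text \<open>Objects: self-equivalences. Arrows ((F,F'),eta): natural isomorphisms F => F'.
  Tensor: composition F (x) K = F o K, horizontal composition on arrows.\<close>
definition Sym :: "('o, 'm) gpd \<Rightarrow> (('o, 'm) sobj, ('o, 'm) smor) mgpd" where
  "Sym G =
    \<lparr> gObj = {F. self_equiv G F},
      gArr = {((F, F'), \<eta>). self_equiv G F \<and> self_equiv G F' \<and> nat_trans G G F F' \<eta>},
      gDom = (\<lambda>u. fst (fst u)),
      gCod = (\<lambda>u. snd (fst u)),
      gComp = (\<lambda>v u. ((fst (fst u), snd (fst v)), (\<lambda>a\<in>gObj G. gComp G (snd v a) (snd u a)))),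
      gId = (\<lambda>F. ((F, F), (\<lambda>a\<in>gObj G. gId G (fst F a)))),
      tens_o = (\<lambda>F K. comp_functor G F K),
      tens_m = (\<lambda>u v. ((comp_functor G (fst (fst u)) (fst (fst v)),
                         comp_functor G (snd (fst u)) (snd (fst v))),
                        (\<lambda>a\<in>gObj G. gComp G (snd u (fst (snd (fst v)) a))
                                             (snd (fst (fst u)) (snd v a))))),
      unit_o = id_functor G,
      assoc_m = (\<lambda>F K L. ((comp_functor G (comp_functor G F K) L, comp_functor G F (comp_functor G K L)),
                           (\<lambda>a\<in>gObj G. gId G (fst F (fst K (fst L a)))))),
      lunit_m = (\<lambda>F. ((comp_functor G (id_functor G) F, F), (\<lambda>a\<in>gObj G. gId G (fst F a)))),
      runit_m = (\<lambda>F. ((comp_functor G F (id_functor G), F), (\<lambda>a\<in>gObj G. gId G (fst F a)))) \<rparr>"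

definition full_sub :: "('o, 'm) gpd \<Rightarrow> 'o set \<Rightarrow> ('o, 'm) gpd" where
  "full_sub G S = G\<lparr> gObj := S, gArr := {f \<in> gArr G. gDom G f \<in> S \<and> gCod G f \<in> S} \<rparr>"

definition aut :: "('o, 'm) gpd \<Rightarrow> 'o \<Rightarrow> 'm monoid" where
  "aut G x = \<lparr> carrier = hom G x x, mult = (\<lambda>f g. gComp G f g), one = gId G x \<rparr>"

definition conn_component :: "('o, 'm) gpd \<Rightarrow> 'o \<Rightarrow> 'o set" where
  "conn_component G x = {y \<in> gObj G. hom G x y \<noteq> {}}"

definition homog_components :: "('o, 'm) gpd \<Rightarrow> 'o set set" where
  "homog_components G =
     {\<Union>{conn_component G y | y. y \<in> gObj G \<and> aut G y \<cong> aut G x} | x. x \<in> gObj G}"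

definition restr_o :: "('o, 'm) gpd \<Rightarrow> ('o, 'm) sobj \<Rightarrow> ('o set \<Rightarrow> ('o, 'm) sobj)" where
  "restr_o G = (\<lambda>F\<in>gObj (Sym G). \<lambda>C\<in>homog_components G.
      (restrict (fst F) C, restrict (snd F) (gArr (full_sub G C))))"

definition restr_m :: "('o, 'm) gpd \<Rightarrow> ('o, 'm) smor \<Rightarrow> ('o set \<Rightarrow> ('o, 'm) smor)" where
  "restr_m G = (\<lambda>u\<in>gArr (Sym G). \<lambda>C\<in>homog_components G.
      (((restrict (fst (fst (fst u))) C, restrict (snd (fst (fst u))) (gArr (full_sub G C))),
        (restrict (fst (snd (fst u))) C, restrict (snd (snd (fst u))) (gArr (full_sub G C)))),
       restrict (snd u) C))"

end

theory Submission
  imports Defs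
begin


locale gpdl =
  fixes G :: "('o, 'm, 'x) gpd_scheme"
  assumes gpd: "groupoid G"
begin

abbreviation "Ob \<equiv> gObj G"
abbreviation "Ar \<equiv> gArr G"
abbreviation "dm \<equiv> gDom G"
abbreviation "cd \<equiv> gCod G"
abbreviation "cmp \<equiv> gComp G"
abbreviation "idt \<equiv> gId G"

lemma dm_ob[simp]: "f \<in> Ar \<Longrightarrow> dm f \<in> Ob" using gpd unfolding groupoid_def by blast
lemma cd_ob[simp]: "f \<in> Ar \<Longrightarrow> cd f \<in> Ob" using gpd unfolding groupoid_def by blast
lemma id_ar[simp]: "a \<in> Ob \<Longrightarrow> idt a \<in> Ar" using gpd unfolding groupoid_def hom_def by blast
lemma dm_id[simp]: "a \<in> Ob \<Longrightarrow> dm (idt a) = a" using gpd unfolding groupoid_def hom_def by blast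
lemma cd_id[simp]: "a \<in> Ob \<Longrightarrow> cd (idt a) = a" using gpd unfolding groupoid_def hom_def by blast
lemma cmp_ar[simp]: "f \<in> Ar \<Longrightarrow> g \<in> Ar \<Longrightarrow> cd f = dm g \<Longrightarrow> cmp g f \<in> Ar"
  using gpd unfolding groupoid_def hom_def by blast
lemma dm_cmp[simp]: "f \<in> Ar \<Longrightarrow> g \<in> Ar \<Longrightarrow> cd f = dm g \<Longrightarrow> dm (cmp g f) = dm f"
  using gpd unfolding groupoid_def hom_def by blast
lemma cd_cmp[simp]: "f \<in> Ar \<Longrightarrow> g \<in> Ar \<Longrightarrow> cd f = dm g \<Longrightarrow> cd (cmp g f) = cd g"
  using gpd unfolding groupoid_def hom_def by blast
lemma cmp_assoc[simp]: "f \<in> Ar \<Longrightarrow> g \<in> Ar \<Longrightarrow> h \<in> Ar \<Longrightarrow> cd f = dm g \<Longrightarrow> cd g = dm h \<Longrightarrow>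
   cmp (cmp h g) f = cmp h (cmp g f)"
  using gpd unfolding groupoid_def by metis
lemma idr: "f \<in> Ar \<Longrightarrow> a = dm f \<Longrightarrow> cmp f (idt a) = f" using gpd unfolding groupoid_def by blast
lemma idl: "f \<in> Ar \<Longrightarrow> a = cd f \<Longrightarrow> cmp (idt a) f = f" using gpd unfolding groupoid_def by blast
lemma idr'[simp]: "f \<in> Ar \<Longrightarrow> dm f = a \<Longrightarrow> cmp f (idt a) = f" using idr by blast
lemma idl'[simp]: "f \<in> Ar \<Longrightarrow> cd f = a \<Longrightarrow> cmp (idt a) f = f" using idl by blast

lemma hom_iff: "f \<in> hom G a b \<longleftrightarrow> f \<in> Ar \<and> dm f = a \<and> cd f = b" unfolding hom_def by blast

definition ginv where "ginv f = (SOME g. g \<in> hom G (cd f) (dm f) \<and> cmp g f = idt (dm f) \<and> cmp f g = idt (cd f))"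

lemma ginv_ex: "f \<in> Ar \<Longrightarrow> ginv f \<in> hom G (cd f) (dm f) \<and> cmp (ginv f) f = idt (dm f) \<and> cmp f (ginv f) = idt (cd f)"
  unfolding ginv_def by (rule someI_ex) (use gpd in \<open>unfold groupoid_def, blast\<close>)

lemma ginv_ar[simp]: "f \<in> Ar \<Longrightarrow> ginv f \<in> Ar" using ginv_ex hom_iff by blast
lemma dm_ginv[simp]: "f \<in> Ar \<Longrightarrow> dm (ginv f) = cd f" using ginv_ex hom_iff by blast
lemma cd_ginv[simp]: "f \<in> Ar \<Longrightarrow> cd (ginv f) = dm f" using ginv_ex hom_iff by blast
lemma ginv_l[simp]: "f \<in> Ar \<Longrightarrow> cmp (ginv f) f = idt (dm f)" using ginv_ex by blast
lemma ginv_r[simp]: "f \<in> Ar \<Longrightarrow> cmp f (ginv f) = idt (cd f)" using ginv_ex by blast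
lemma ginv_l2[simp]: "f \<in> Ar \<Longrightarrow> g \<in> Ar \<Longrightarrow> cd g = dm f \<Longrightarrow> cmp (ginv f) (cmp f g) = g"
  by (metis cmp_assoc ginv_ar cd_ginv dm_ginv ginv_l idl' dm_ob)
lemma ginv_r2[simp]: "f \<in> Ar \<Longrightarrow> g \<in> Ar \<Longrightarrow> cd g = cd f \<Longrightarrow> cmp f (cmp (ginv f) g) = g"
  by (metis cmp_assoc ginv_ar cd_ginv dm_ginv ginv_r idl' cd_ob)

lemma cancel_r: "h \<in> Ar \<Longrightarrow> f \<in> Ar \<Longrightarrow> g \<in> Ar \<Longrightarrow> cd h = dm f \<Longrightarrow> cd h = dm g \<Longrightarrow>
   cmp f h = cmp g h \<Longrightarrow> f = g"
  by (metis cmp_assoc ginv_ar cd_ginv dm_ginv ginv_r idr' cd_ob)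
lemma cancel_l: "h \<in> Ar \<Longrightarrow> f \<in> Ar \<Longrightarrow> g \<in> Ar \<Longrightarrow> cd f = dm h \<Longrightarrow> cd g = dm h \<Longrightarrow>
   cmp h f = cmp h g \<Longrightarrow> f = g"
  by (metis ginv_l2)

end



context gpdl begin


lemma fo_ob[simp]: "gfunctor G G F \<Longrightarrow> a \<in> Ob \<Longrightarrow> fst F a \<in> Ob" unfolding gfunctor_def by blast
lemma fa_ar[simp]: "gfunctor G G F \<Longrightarrow> f \<in> Ar \<Longrightarrow> snd F f \<in> Ar" unfolding gfunctor_def hom_def by blast
lemma dm_fa[simp]: "gfunctor G G F \<Longrightarrow> f \<in> Ar \<Longrightarrow> dm (snd F f) = fst F (dm f)" unfolding gfunctor_def hom_def by blast
lemma cd_fa[simp]: "gfunctor G G F \<Longrightarrow> f \<in> Ar \<Longrightarrow> cd (snd F f) = fst F (cd f)" unfolding gfunctor_def hom_def by blast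
lemma f_cmp[simp]: "gfunctor G G F \<Longrightarrow> f \<in> Ar \<Longrightarrow> g \<in> Ar \<Longrightarrow> cd f = dm g \<Longrightarrow>
   snd F (cmp g f) = cmp (snd F g) (snd F f)" unfolding gfunctor_def by blast
lemma f_id[simp]: "gfunctor G G F \<Longrightarrow> a \<in> Ob \<Longrightarrow> snd F (idt a) = idt (fst F a)" unfolding gfunctor_def by blast
lemma fo_ext: "gfunctor G G F \<Longrightarrow> fst F \<in> extensional Ob" unfolding gfunctor_def by blast
lemma fa_ext: "gfunctor G G F \<Longrightarrow> snd F \<in> extensional Ar" unfolding gfunctor_def by blast

lemma f_ginv[simp]: "gfunctor G G F \<Longrightarrow> f \<in> Ar \<Longrightarrow> snd F (ginv f) = ginv (snd F f)"
proof -
  assume F: "gfunctor G G F" and f: "f \<in> Ar"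
  have "cmp (snd F (ginv f)) (snd F f) = idt (fst F (dm f))"
    using F f by (metis f_cmp ginv_ar ginv_l dm_ginv f_id dm_ob)
  hence "cmp (snd F (ginv f)) (snd F f) = cmp (ginv (snd F f)) (snd F f)" using F f by simp
  show ?thesis
    apply (rule cancel_r[of "snd F f"])
    using F f apply simp_all
    using \<open>cmp (snd F (ginv f)) (snd F f) = cmp (ginv (snd F f)) (snd F f)\<close> by simp
qed

lemma functor_eqI:
  assumes "gfunctor G G F" "gfunctor G G F'" "\<And>a. a \<in> Ob \<Longrightarrow> fst F a = fst F' a"
    "\<And>f. f \<in> Ar \<Longrightarrow> snd F f = snd F' f"
  shows "F = F'"
proof -
  have "fst F = fst F'" by (rule extensionalityI[OF fo_ext[OF assms(1)] fo_ext[OF assms(2)]]) (use assms in auto)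
  moreover have "snd F = snd F'" by (rule extensionalityI[OF fa_ext[OF assms(1)] fa_ext[OF assms(2)]]) (use assms in auto)
  ultimately show ?thesis by (simp add: prod_eq_iff)
qed

lemma cf_fst[simp]: "a \<in> Ob \<Longrightarrow> fst (comp_functor G F K) a = fst F (fst K a)" unfolding comp_functor_def by simp
lemma cf_snd[simp]: "f \<in> Ar \<Longrightarrow> snd (comp_functor G F K) f = snd F (snd K f)" unfolding comp_functor_def by simp
lemma idf_fst[simp]: "a \<in> Ob \<Longrightarrow> fst (id_functor G) a = a" unfolding id_functor_def by simp
lemma idf_snd[simp]: "f \<in> Ar \<Longrightarrow> snd (id_functor G) f = f" unfolding id_functor_def by simp

lemma idf_fun[simp]: "gfunctor G G (id_functor G)"
  unfolding gfunctor_def id_functor_def hom_def by auto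

lemma cf_fun[simp]: "gfunctor G G F \<Longrightarrow> gfunctor G G K \<Longrightarrow> gfunctor G G (comp_functor G F K)"
  unfolding gfunctor_def[of G G "comp_functor G F K"] hom_def by (auto simp: comp_functor_def)

lemma cf_assoc: "gfunctor G G F \<Longrightarrow> gfunctor G G K \<Longrightarrow> gfunctor G G L \<Longrightarrow>
  comp_functor G (comp_functor G F K) L = comp_functor G F (comp_functor G K L)"
  by (rule functor_eqI) auto
lemma cf_idl[simp]: "gfunctor G G F \<Longrightarrow> comp_functor G (id_functor G) F = F"
  by (rule functor_eqI) auto
lemma cf_idr[simp]: "gfunctor G G F \<Longrightarrow> comp_functor G F (id_functor G) = F"
  by (rule functor_eqI) auto

end 

context gpdl begin
lemma nt_ar[simp]: "nat_trans G G A B \<eta> \<Longrightarrow> a \<in> Ob \<Longrightarrow> \<eta> a \<in> Ar" unfolding nat_trans_def hom_def by blast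
lemma dm_nt[simp]: "nat_trans G G A B \<eta> \<Longrightarrow> a \<in> Ob \<Longrightarrow> dm (\<eta> a) = fst A a" unfolding nat_trans_def hom_def by blast
lemma cd_nt[simp]: "nat_trans G G A B \<eta> \<Longrightarrow> a \<in> Ob \<Longrightarrow> cd (\<eta> a) = fst B a" unfolding nat_trans_def hom_def by blast
lemma nt_nat: "nat_trans G G A B \<eta> \<Longrightarrow> f \<in> Ar \<Longrightarrow> cmp (\<eta> (cd f)) (snd A f) = cmp (snd B f) (\<eta> (dm f))"
  unfolding nat_trans_def by blast
lemma nt_ext: "nat_trans G G A B \<eta> \<Longrightarrow> \<eta> \<in> extensional Ob" unfolding nat_trans_def by blast

lemma nat_transI:
  assumes "\<eta> \<in> extensional Ob" "\<And>a. a \<in> Ob \<Longrightarrow> \<eta> a \<in> Ar"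
    "\<And>a. a \<in> Ob \<Longrightarrow> dm (\<eta> a) = fst A a" "\<And>a. a \<in> Ob \<Longrightarrow> cd (\<eta> a) = fst B a"
    "\<And>f. f \<in> Ar \<Longrightarrow> cmp (\<eta> (cd f)) (snd A f) = cmp (snd B f) (\<eta> (dm f))"
  shows "nat_trans G G A B \<eta>"
  using assms unfolding nat_trans_def hom_def by blast

lemma nt_id: "gfunctor G G F \<Longrightarrow> nat_trans G G F F (\<lambda>a\<in>Ob. idt (fst F a))"
  by (rule nat_transI) auto

lemma nt_vcomp:
  assumes A: "gfunctor G G A" and B: "gfunctor G G B" and C: "gfunctor G G C"
    and e: "nat_trans G G A B \<eta>" and t: "nat_trans G G B C \<theta>"
  shows "nat_trans G G A C (\<lambda>a\<in>Ob. cmp (\<theta> a) (\<eta> a))"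
proof (rule nat_transI)
  fix f assume f: "f \<in> Ar"
  have "cmp (cmp (\<theta> (cd f)) (\<eta> (cd f))) (snd A f) = cmp (\<theta> (cd f)) (cmp (\<eta> (cd f)) (snd A f))"
    using A B e t f by simp
  also have "\<dots> = cmp (\<theta> (cd f)) (cmp (snd B f) (\<eta> (dm f)))" using nt_nat[OF e f] by simp
  also have "\<dots> = cmp (cmp (\<theta> (cd f)) (snd B f)) (\<eta> (dm f))" using A B e t f by simp
  also have "\<dots> = cmp (cmp (snd C f) (\<theta> (dm f))) (\<eta> (dm f))" using nt_nat[OF t f] by simp
  also have "\<dots> = cmp (snd C f) (cmp (\<theta> (dm f)) (\<eta> (dm f)))" using C B e t f by simp
  finally show "cmp ((\<lambda>a\<in>Ob. cmp (\<theta> a) (\<eta> a)) (cd f)) (snd A f) =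
      cmp (snd C f) ((\<lambda>a\<in>Ob. cmp (\<theta> a) (\<eta> a)) (dm f))" using f by simp
qed (use e t in auto)

lemma nt_hcomp:
  assumes F: "gfunctor G G F" and F': "gfunctor G G F'" and K: "gfunctor G G K" and K': "gfunctor G G K'"
    and u: "nat_trans G G F F' u" and v: "nat_trans G G K K' v"
  shows "nat_trans G G (comp_functor G F K) (comp_functor G F' K') (\<lambda>a\<in>Ob. cmp (u (fst K' a)) (snd F (v a)))"
proof (rule nat_transI)
  fix f assume f: "f \<in> Ar"
  let ?a = "dm f" and ?b = "cd f"
  have "cmp (cmp (u (fst K' ?b)) (snd F (v ?b))) (snd F (snd K f))
      = cmp (u (fst K' ?b)) (snd F (cmp (v ?b) (snd K f)))" using F K K' u v f by simp
  also have "\<dots> = cmp (u (fst K' ?b)) (snd F (cmp (snd K' f) (v ?a)))" using nt_nat[OF v f] by simp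
  also have "\<dots> = cmp (cmp (u (cd (snd K' f))) (snd F (snd K' f))) (snd F (v ?a))" using F K K' u v f by simp
  also have "\<dots> = cmp (cmp (snd F' (snd K' f)) (u (dm (snd K' f)))) (snd F (v ?a))"
    using nt_nat[OF u fa_ar[OF K' f]] by simp
  also have "\<dots> = cmp (snd F' (snd K' f)) (cmp (u (fst K' ?a)) (snd F (v ?a)))" using F F' K K' u v f by simp
  finally show "cmp ((\<lambda>a\<in>Ob. cmp (u (fst K' a)) (snd F (v a))) (cd f)) (snd (comp_functor G F K) f) =
         cmp (snd (comp_functor G F' K') f) ((\<lambda>a\<in>Ob. cmp (u (fst K' a)) (snd F (v a))) (dm f))"
    using f by simp
qed (use F F' K K' u v in auto)

lemma nt_inv:
  assumes A: "gfunctor G G A" and B: "gfunctor G G B" and e: "nat_trans G G A B \<eta>"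
  shows "nat_trans G G B A (\<lambda>a\<in>Ob. ginv (\<eta> a))"
proof (rule nat_transI)
  fix f assume f: "f \<in> Ar"
  let ?x = "\<eta> (dm f)" and ?y = "\<eta> (cd f)"
  have x: "?x \<in> Ar" "dm ?x = fst A (dm f)" "cd ?x = fst B (dm f)" using e f by auto
  have y: "?y \<in> Ar" "dm ?y = fst A (cd f)" "cd ?y = fst B (cd f)" using e f by auto
  have fa: "snd A f \<in> Ar" "dm (snd A f) = fst A (dm f)" "cd (snd A f) = fst A (cd f)" using A f by auto
  have fb: "snd B f \<in> Ar" "dm (snd B f) = fst B (dm f)" "cd (snd B f) = fst B (cd f)" using B f by auto
  have 1: "cmp (snd B f) ?x = cmp ?y (snd A f)" using nt_nat[OF e f] by simp
  have "cmp (snd A f) (ginv ?x) = cmp (ginv ?y) (cmp ?y (cmp (snd A f) (ginv ?x)))"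
    using x y fa by (subst ginv_l2) auto
  also have "\<dots> = cmp (ginv ?y) (cmp (cmp ?y (snd A f)) (ginv ?x))"
    using x y fa by (subst cmp_assoc) auto
  also have "\<dots> = cmp (ginv ?y) (cmp (cmp (snd B f) ?x) (ginv ?x))" using 1 by simp
  also have "\<dots> = cmp (ginv ?y) (snd B f)"
    using x fb by (subst cmp_assoc) (auto simp del: cmp_assoc)
  finally show "cmp ((\<lambda>a\<in>Ob. ginv (\<eta> a)) (cd f)) (snd B f) = cmp (snd A f) ((\<lambda>a\<in>Ob. ginv (\<eta> a)) (dm f))"
    using f by simp
qed (use e in auto)

lemma nt_eq_functor: "nat_trans G G A B \<eta> \<Longrightarrow> A = A' \<Longrightarrow> B = B' \<Longrightarrow> nat_trans G G A' B' \<eta>" by simp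

end


context gpdl begin

lemma se_fun[simp]: "self_equiv G F \<Longrightarrow> gfunctor G G F" unfolding self_equiv_def by blast

lemma se_qinv: "self_equiv G F \<Longrightarrow> \<exists>K. self_equiv G K \<and>
   (\<exists>\<eta>. nat_trans G G (comp_functor G K F) (id_functor G) \<eta>) \<and>
   (\<exists>\<theta>. nat_trans G G (comp_functor G F K) (id_functor G) \<theta>)"
  unfolding self_equiv_def by blast

lemma se_id[simp]: "self_equiv G (id_functor G)"
  unfolding self_equiv_def using nt_id[OF idf_fun] by (intro conjI exI[of _ "id_functor G"]) auto

lemma nt_sandwich:
  assumes A: "gfunctor G G A" and B: "gfunctor G G B" and C: "gfunctor G G C" and D: "gfunctor G G D"
    and a: "nat_trans G G (comp_functor G A B) (id_functor G) \<alpha>"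
    and b: "nat_trans G G (comp_functor G C D) (id_functor G) \<beta>"
  shows "\<exists>\<gamma>. nat_trans G G (comp_functor G (comp_functor G C A) (comp_functor G B D)) (id_functor G) \<gamma>"
proof -
  have AB: "gfunctor G G (comp_functor G A B)" using A B by simp
  note 1 = nt_hcomp[OF AB idf_fun D D a nt_id[OF D]]
  have ABD: "gfunctor G G (comp_functor G (comp_functor G A B) D)" using A B D by simp
  have h1: "nat_trans G G (comp_functor G (comp_functor G A B) D) D
     (\<lambda>a\<in>Ob. cmp (\<alpha> (fst D a)) (snd (comp_functor G A B) ((\<lambda>a\<in>Ob. idt (fst D a)) a)))"
    using 1 D by simp
  note 2 = nt_hcomp[OF C C ABD D nt_id[OF C] h1]
  note 3 = nt_vcomp[OF _ _ idf_fun 2 b]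
  have "comp_functor G C (comp_functor G (comp_functor G A B) D) = comp_functor G (comp_functor G C A) (comp_functor G B D)"
    using A B C D by (simp add: cf_assoc)
  thus ?thesis using 3 A B C D by auto
qed

lemma se_comp[simp]:
  assumes F: "self_equiv G F" and K: "self_equiv G K"
  shows "self_equiv G (comp_functor G F K)"
proof -
  obtain F' where F': "self_equiv G F'" "\<exists>\<eta>. nat_trans G G (comp_functor G F' F) (id_functor G) \<eta>"
     "\<exists>\<theta>. nat_trans G G (comp_functor G F F') (id_functor G) \<theta>" using se_qinv[OF F] by blast
  obtain K' where K': "self_equiv G K'" "\<exists>\<eta>. nat_trans G G (comp_functor G K' K) (id_functor G) \<eta>"
     "\<exists>\<theta>. nat_trans G G (comp_functor G K K') (id_functor G) \<theta>" using se_qinv[OF K] by blast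
  have f: "gfunctor G G F" "gfunctor G G F'" "gfunctor G G K" "gfunctor G G K'" using F F' K K' by auto
  show ?thesis unfolding self_equiv_def
  proof (intro conjI exI[of _ "comp_functor G K' F'"])
    show "gfunctor G G (comp_functor G F K)" "gfunctor G G (comp_functor G K' F')" using f by auto
    show "\<exists>\<eta>. nat_trans G G (comp_functor G (comp_functor G K' F') (comp_functor G F K)) (id_functor G) \<eta>"
      using F'(2) K'(2) nt_sandwich[OF f(2) f(1) f(4) f(3)] by blast
    show "\<exists>\<eta>. nat_trans G G (comp_functor G (comp_functor G F K) (comp_functor G K' F')) (id_functor G) \<eta>"
      using F'(3) K'(3) nt_sandwich[OF f(3) f(4) f(1) f(2)] by blast
  qed
qed

lemma faithful:
  assumes A: "gfunctor G G A" and B: "gfunctor G G B" and z: "nat_trans G G (comp_functor G A B) (id_functor G) \<zeta>"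
    and f: "f \<in> Ar" and g: "g \<in> Ar" and dd: "dm f = dm g" and cc: "cd f = cd g" and eq: "snd B f = snd B g"
  shows "f = g"
proof -
  have "cmp (\<zeta> (cd f)) (snd A (snd B f)) = cmp f (\<zeta> (dm f))"
    using nt_nat[OF z f] f by simp
  moreover have "cmp (\<zeta> (cd g)) (snd A (snd B g)) = cmp g (\<zeta> (dm g))"
    using nt_nat[OF z g] g by simp
  ultimately have "cmp f (\<zeta> (dm f)) = cmp g (\<zeta> (dm f))" using dd cc eq by simp
  thus ?thesis
    by (rule cancel_r[rotated 5]) (use f g dd z in auto)
qed

end


locale gpdu = gpdl G for G :: "('o, 'm) gpd"
begin

abbreviation "S \<equiv> Sym G"

lemma S_obj[simp]: "F \<in> gObj S \<longleftrightarrow> self_equiv G F" by (simp add: Sym_def)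
lemma S_arr: "u \<in> gArr S \<longleftrightarrow> self_equiv G (fst (fst u)) \<and> self_equiv G (snd (fst u)) \<and>
    nat_trans G G (fst (fst u)) (snd (fst u)) (snd u)"
  by (cases u) (auto simp: Sym_def)
lemma S_dom[simp]: "gDom S u = fst (fst u)" by (simp add: Sym_def)
lemma S_cod[simp]: "gCod S u = snd (fst u)" by (simp add: Sym_def)
lemma S_comp[simp]: "gComp S v u = ((fst (fst u), snd (fst v)), (\<lambda>a\<in>Ob. cmp (snd v a) (snd u a)))" by (simp add: Sym_def)
lemma S_id[simp]: "gId S F = ((F, F), (\<lambda>a\<in>Ob. idt (fst F a)))" by (simp add: Sym_def)
lemma S_t[simp]: "tens_o S F K = comp_functor G F K" by (simp add: Sym_def)
lemma S_tm[simp]: "tens_m S u v = ((comp_functor G (fst (fst u)) (fst (fst v)),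
                         comp_functor G (snd (fst u)) (snd (fst v))),
                        (\<lambda>a\<in>Ob. cmp (snd u (fst (snd (fst v)) a)) (snd (fst (fst u)) (snd v a))))" by (simp add: Sym_def)
lemma S_u[simp]: "unit_o S = id_functor G" by (simp add: Sym_def)
lemma S_as[simp]: "assoc_m S F K L = ((comp_functor G (comp_functor G F K) L, comp_functor G F (comp_functor G K L)),
                           (\<lambda>a\<in>Ob. idt (fst F (fst K (fst L a)))))" by (simp add: Sym_def)
lemma S_lu[simp]: "lunit_m S F = ((comp_functor G (id_functor G) F, F), (\<lambda>a\<in>Ob. idt (fst F a)))" by (simp add: Sym_def)
lemma S_ru[simp]: "runit_m S F = ((comp_functor G F (id_functor G), F), (\<lambda>a\<in>Ob. idt (fst F a)))" by (simp add: Sym_def)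

lemma S_arrI: "self_equiv G F \<Longrightarrow> self_equiv G F' \<Longrightarrow> nat_trans G G F F' \<eta> \<Longrightarrow> ((F, F'), \<eta>) \<in> gArr S"
  by (simp add: S_arr)

lemma S_arrE: assumes "u \<in> gArr S"
  obtains F F' \<eta> where "u = ((F, F'), \<eta>)" "self_equiv G F" "self_equiv G F'" "nat_trans G G F F' \<eta>"
  using assms by (cases u) (auto simp: S_arr)

lemma S_hom: "u \<in> hom S F F' \<longleftrightarrow> (\<exists>\<eta>. u = ((F, F'), \<eta>) \<and> self_equiv G F \<and> self_equiv G F' \<and> nat_trans G G F F' \<eta>)"
  unfolding hom_def by (cases u) (auto simp: S_arr)

lemma restr_eqI: "f \<in> extensional Ob \<Longrightarrow> (\<And>a. a \<in> Ob \<Longrightarrow> f a = g a) \<Longrightarrow> f = restrict g Ob"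
  by (rule extensionalityI[of _ Ob]) auto

lemma S_groupoid: "groupoid S"
  unfolding groupoid_def
proof (intro conjI ballI impI)
  fix f assume "f \<in> gArr S" thus "gDom S f \<in> gObj S" "gCod S f \<in> gObj S" by (auto simp: S_arr)
next
  fix a assume "a \<in> gObj S" thus "gId S a \<in> hom S a a" using nt_id by (auto simp: S_hom)
next
  fix f g assume f: "f \<in> gArr S" and g: "g \<in> gArr S" and e: "gCod S f = gDom S g"
  from f obtain F F' \<eta> where fe: "f = ((F, F'), \<eta>)" "self_equiv G F" "self_equiv G F'" "nat_trans G G F F' \<eta>" by (rule S_arrE)
  from g obtain K K' \<theta> where ge: "g = ((K, K'), \<theta>)" "self_equiv G K" "self_equiv G K'" "nat_trans G G K K' \<theta>" by (rule S_arrE)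
  have "K = F'" using e fe ge by simp
  thus "gComp S g f \<in> hom S (gDom S f) (gCod S g)"
    using fe ge nt_vcomp[of F F' K' \<eta> \<theta>] by (auto simp: S_hom)
next
  fix f g h assume f: "f \<in> gArr S" and g: "g \<in> gArr S" and h: "h \<in> gArr S"
    and e1: "gCod S f = gDom S g" and e2: "gCod S g = gDom S h"
  from f obtain F F' \<eta> where fe: "f = ((F, F'), \<eta>)" "self_equiv G F" "self_equiv G F'" "nat_trans G G F F' \<eta>" by (rule S_arrE)
  from g obtain K K' \<theta> where ge: "g = ((K, K'), \<theta>)" "self_equiv G K" "self_equiv G K'" "nat_trans G G K K' \<theta>" by (rule S_arrE)
  from h obtain L L' \<kappa> where he: "h = ((L, L'), \<kappa>)" "self_equiv G L" "self_equiv G L'" "nat_trans G G L L' \<kappa>" by (rule S_arrE)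
  have "K = F'" "L = K'" using e1 e2 fe ge he by auto
  then show "gComp S h (gComp S g f) = gComp S (gComp S h g) f"
    using fe ge he by (auto intro!: restrict_ext)
next
  fix f assume f: "f \<in> gArr S"
  from f obtain F F' \<eta> where fe: "f = ((F, F'), \<eta>)" "self_equiv G F" "self_equiv G F'" "nat_trans G G F F' \<eta>" by (rule S_arrE)
  have x: "\<eta> \<in> extensional Ob" using nt_ext fe by blast
  show "gComp S f (gId S (gDom S f)) = f" "gComp S (gId S (gCod S f)) f = f"
    using fe x by (auto intro!: restr_eqI[symmetric])
  let ?g = "((F', F), (\<lambda>a\<in>Ob. ginv (\<eta> a)))"
  show "\<exists>g\<in>hom S (gCod S f) (gDom S f). gComp S g f = gId S (gDom S f) \<and> gComp S f g = gId S (gCod S f)"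
  proof (intro bexI[of _ ?g] conjI)
    show "?g \<in> hom S (gCod S f) (gDom S f)" using fe nt_inv[of F F' \<eta>] by (auto simp: S_hom)
  qed (use fe in \<open>auto intro!: restrict_ext\<close>)
qed

end


context gpdu begin

lemma se_ob[simp]: "self_equiv G F \<Longrightarrow> a \<in> Ob \<Longrightarrow> fst F a \<in> Ob" by simp
lemma S_interchange:
  assumes f: "f \<in> gArr S" and f': "f' \<in> gArr S" and g: "g \<in> gArr S" and g': "g' \<in> gArr S"
    and e1: "gCod S f = gDom S f'" and e2: "gCod S g = gDom S g'"
  shows "tens_m S (gComp S f' f) (gComp S g' g) = gComp S (tens_m S f' g') (tens_m S f g)"
proof -
  from f obtain F F' \<eta> where fe: "f = ((F, F'), \<eta>)" "self_equiv G F" "self_equiv G F'" "nat_trans G G F F' \<eta>" by (rule S_arrE)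
  from f' obtain F1 F'' \<eta>' where fe': "f' = ((F1, F''), \<eta>')" "self_equiv G F1" "self_equiv G F''" "nat_trans G G F1 F'' \<eta>'" by (rule S_arrE)
  from g obtain K K' \<theta> where ge: "g = ((K, K'), \<theta>)" "self_equiv G K" "self_equiv G K'" "nat_trans G G K K' \<theta>" by (rule S_arrE)
  from g' obtain K1 K'' \<theta>' where ge': "g' = ((K1, K''), \<theta>')" "self_equiv G K1" "self_equiv G K''" "nat_trans G G K1 K'' \<theta>'" by (rule S_arrE)
  have [simp]: "F1 = F'" "K1 = K'" using e1 e2 fe fe' ge ge' by auto
  have fu: "gfunctor G G F" "gfunctor G G F'" "gfunctor G G F''" "gfunctor G G K" "gfunctor G G K'" "gfunctor G G K''"
    using fe fe' ge ge' by auto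
  have n: "nat_trans G G F F' \<eta>" "nat_trans G G F' F'' \<eta>'" "nat_trans G G K K' \<theta>" "nat_trans G G K' K'' \<theta>'"
    using fe fe' ge ge' by auto
  have comp: "cmp (cmp (\<eta>' (fst K'' a)) (\<eta> (fst K'' a))) (snd F (cmp (\<theta>' a) (\<theta> a)))
     = cmp (cmp (\<eta>' (fst K'' a)) (snd F' (\<theta>' a))) (cmp (\<eta> (fst K' a)) (snd F (\<theta> a)))" if a: "a \<in> Ob" for a
  proof -
    have nn: "cmp (\<eta> (fst K'' a)) (snd F (\<theta>' a)) = cmp (snd F' (\<theta>' a)) (\<eta> (fst K' a))"
      using nt_nat[OF n(1), of "\<theta>' a"] n a by simp
    have "cmp (cmp (\<eta>' (fst K'' a)) (\<eta> (fst K'' a))) (snd F (cmp (\<theta>' a) (\<theta> a)))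
        = cmp (\<eta>' (fst K'' a)) (cmp (cmp (\<eta> (fst K'' a)) (snd F (\<theta>' a))) (snd F (\<theta> a)))"
      using fu n a by simp
    also have "\<dots> = cmp (\<eta>' (fst K'' a)) (cmp (cmp (snd F' (\<theta>' a)) (\<eta> (fst K' a))) (snd F (\<theta> a)))"
      using nn by simp
    also have "\<dots> = cmp (cmp (\<eta>' (fst K'' a)) (snd F' (\<theta>' a))) (cmp (\<eta> (fst K' a)) (snd F (\<theta> a)))"
      using fu n a by simp
    finally show ?thesis .
  qed
  show ?thesis using fe fe' ge ge' fu n comp by (auto intro!: restrict_ext)
qed

lemma S_tm_hom:
  assumes f: "f \<in> gArr S" and g: "g \<in> gArr S"
  shows "tens_m S f g \<in> hom S (tens_o S (gDom S f) (gDom S g)) (tens_o S (gCod S f) (gCod S g))"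
proof -
  from f obtain F F' \<eta> where fe: "f = ((F, F'), \<eta>)" "self_equiv G F" "self_equiv G F'" "nat_trans G G F F' \<eta>" by (rule S_arrE)
  from g obtain K K' \<theta> where ge: "g = ((K, K'), \<theta>)" "self_equiv G K" "self_equiv G K'" "nat_trans G G K K' \<theta>" by (rule S_arrE)
  show ?thesis using fe ge nt_hcomp[of F F' K K' \<eta> \<theta>] by (auto simp: S_hom)
qed

lemma S_assoc_nat:
  assumes f: "f \<in> gArr S" and g: "g \<in> gArr S" and h: "h \<in> gArr S"
  shows "gComp S (assoc_m S (gCod S f) (gCod S g) (gCod S h)) (tens_m S (tens_m S f g) h) =
         gComp S (tens_m S f (tens_m S g h)) (assoc_m S (gDom S f) (gDom S g) (gDom S h))"
proof -
  from f obtain F F' \<eta> where fe: "f = ((F, F'), \<eta>)" "self_equiv G F" "self_equiv G F'" "nat_trans G G F F' \<eta>" by (rule S_arrE)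
  from g obtain K K' \<theta> where ge: "g = ((K, K'), \<theta>)" "self_equiv G K" "self_equiv G K'" "nat_trans G G K K' \<theta>" by (rule S_arrE)
  from h obtain L L' \<kappa> where he: "h = ((L, L'), \<kappa>)" "self_equiv G L" "self_equiv G L'" "nat_trans G G L L' \<kappa>" by (rule S_arrE)
  have fu: "gfunctor G G F" "gfunctor G G F'" "gfunctor G G K" "gfunctor G G K'" "gfunctor G G L" "gfunctor G G L'"
    using fe ge he by auto
  show ?thesis using fe ge he fu by (auto intro!: restrict_ext)
qed

lemma S_lu_nat:
  assumes f: "f \<in> gArr S"
  shows "gComp S (lunit_m S (gCod S f)) (tens_m S (gId S (unit_o S)) f) = gComp S f (lunit_m S (gDom S f))"
proof -
  from f obtain F F' \<eta> where fe: "f = ((F, F'), \<eta>)" "self_equiv G F" "self_equiv G F'" "nat_trans G G F F' \<eta>" by (rule S_arrE)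
  show ?thesis using fe by (auto intro!: restrict_ext)
qed

lemma S_ru_nat:
  assumes f: "f \<in> gArr S"
  shows "gComp S (runit_m S (gCod S f)) (tens_m S f (gId S (unit_o S))) = gComp S f (runit_m S (gDom S f))"
proof -
  from f obtain F F' \<eta> where fe: "f = ((F, F'), \<eta>)" "self_equiv G F" "self_equiv G F'" "nat_trans G G F F' \<eta>" by (rule S_arrE)
  show ?thesis using fe by (auto intro!: restrict_ext)
qed

lemma S_pentagon:
  assumes "self_equiv G a" "self_equiv G b" "self_equiv G d" "self_equiv G e"
  shows "gComp S (tens_m S (gId S a) (assoc_m S b d e)) (gComp S (assoc_m S a (tens_o S b d) e) (tens_m S (assoc_m S a b d) (gId S e)))
           = gComp S (assoc_m S a b (tens_o S d e)) (assoc_m S (tens_o S a b) d e)"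
  using assms by (auto intro!: restrict_ext simp: cf_assoc)

lemma S_triangle:
  assumes "self_equiv G a" "self_equiv G b"
  shows "gComp S (tens_m S (gId S a) (lunit_m S b)) (assoc_m S a (unit_o S) b) = tens_m S (runit_m S a) (gId S b)"
  using assms by (auto intro!: restrict_ext)

end


context gpdu begin

lemma S_monoidal: "monoidal_groupoid S"
  unfolding monoidal_groupoid_def Let_def
proof (intro conjI ballI impI)
  show "groupoid S" by (rule S_groupoid)
  show "unit_o S \<in> gObj S" by simp
next
  fix a b assume "a \<in> gObj S" "b \<in> gObj S"
  thus "tens_o S a b \<in> gObj S" by simp
  show "tens_m S (gId S a) (gId S b) = gId S (tens_o S a b)"
    using \<open>a \<in> gObj S\<close> \<open>b \<in> gObj S\<close> by (auto intro!: restrict_ext)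
  show "gComp S (tens_m S (gId S a) (lunit_m S b)) (assoc_m S a (unit_o S) b) = tens_m S (runit_m S a) (gId S b)"
    using \<open>a \<in> gObj S\<close> \<open>b \<in> gObj S\<close> S_triangle by simp
next
  fix f g assume "f \<in> gArr S" "g \<in> gArr S"
  thus "tens_m S f g \<in> hom S (tens_o S (gDom S f) (gDom S g)) (tens_o S (gCod S f) (gCod S g))" by (rule S_tm_hom)
next
  fix f f' g g' assume "f \<in> gArr S" "f' \<in> gArr S" "g \<in> gArr S" "g' \<in> gArr S" "gCod S f = gDom S f'" "gCod S g = gDom S g'"
  thus "tens_m S (gComp S f' f) (gComp S g' g) = gComp S (tens_m S f' g') (tens_m S f g)" by (rule S_interchange)
next
  fix a b d assume a: "a \<in> gObj S" and b: "b \<in> gObj S" and d: "d \<in> gObj S"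
  have fu: "gfunctor G G a" "gfunctor G G b" "gfunctor G G d" using a b d by auto
  have 1: "comp_functor G (comp_functor G a b) d = comp_functor G a (comp_functor G b d)" using fu by (simp add: cf_assoc)
  have 2: "(\<lambda>x\<in>Ob. idt (fst a (fst b (fst d x)))) = (\<lambda>x\<in>Ob. idt (fst (comp_functor G a (comp_functor G b d)) x))"
    by (rule restrict_ext) simp
  show "assoc_m S a b d \<in> hom S (tens_o S (tens_o S a b) d) (tens_o S a (tens_o S b d))"
    using a b d nt_id[of "comp_functor G a (comp_functor G b d)"] fu by (simp add: S_hom 1 2)
next
  fix a assume a: "a \<in> gObj S"
  show "lunit_m S a \<in> hom S (tens_o S (unit_o S) a) a" "runit_m S a \<in> hom S (tens_o S a (unit_o S)) a"
    using a nt_id[of a] by (auto simp: S_hom)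
next
  fix f g h assume "f \<in> gArr S" "g \<in> gArr S" "h \<in> gArr S"
  thus "gComp S (assoc_m S (gCod S f) (gCod S g) (gCod S h)) (tens_m S (tens_m S f g) h) =
         gComp S (tens_m S f (tens_m S g h)) (assoc_m S (gDom S f) (gDom S g) (gDom S h))" by (rule S_assoc_nat)
next
  fix f assume "f \<in> gArr S"
  thus "gComp S (lunit_m S (gCod S f)) (tens_m S (gId S (unit_o S)) f) = gComp S f (lunit_m S (gDom S f))" by (rule S_lu_nat)
  show "gComp S (runit_m S (gCod S f)) (tens_m S f (gId S (unit_o S))) = gComp S f (runit_m S (gDom S f))"
    using \<open>f \<in> gArr S\<close> by (rule S_ru_nat)
next
  fix a b d e assume "a \<in> gObj S" "b \<in> gObj S" "d \<in> gObj S" "e \<in> gObj S"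
  thus "gComp S (tens_m S (gId S a) (assoc_m S b d e)) (gComp S (assoc_m S a (tens_o S b d) e) (tens_m S (assoc_m S a b d) (gId S e)))
           = gComp S (assoc_m S a b (tens_o S d e)) (assoc_m S (tens_o S a b) d e)" using S_pentagon by simp
qed

lemma S_two_group: "two_group S"
  unfolding two_group_def
proof (intro conjI ballI)
  show "monoidal_groupoid S" by (rule S_monoidal)
  fix F assume F: "F \<in> gObj S"
  then obtain K where K: "self_equiv G K" "\<exists>\<eta>. nat_trans G G (comp_functor G K F) (id_functor G) \<eta>"
     "\<exists>\<theta>. nat_trans G G (comp_functor G F K) (id_functor G) \<theta>" using se_qinv[of F] F by (simp only: S_obj) blast
  then obtain \<eta> \<theta> where e: "nat_trans G G (comp_functor G K F) (id_functor G) \<eta>"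
     "nat_trans G G (comp_functor G F K) (id_functor G) \<theta>" by blast
  show "\<exists>b\<in>gObj S. hom S (tens_o S F b) (unit_o S) \<noteq> {} \<and> hom S (tens_o S b F) (unit_o S) \<noteq> {}"
  proof (rule bexI[of _ K], rule conjI)
    have "((comp_functor G F K, id_functor G), \<theta>) \<in> hom S (tens_o S F K) (unit_o S)"
      using F K(1) e by (simp add: S_hom)
    thus "hom S (tens_o S F K) (unit_o S) \<noteq> {}" by blast
    have "((comp_functor G K F, id_functor G), \<eta>) \<in> hom S (tens_o S K F) (unit_o S)"
      using F K(1) e by (simp add: S_hom)
    thus "hom S (tens_o S K F) (unit_o S) \<noteq> {}" by blast
  qed (use K in simp)
qed

end


lemma (in gpdl) sub_groupoid: "C \<subseteq> Ob \<Longrightarrow> groupoid (G\<lparr>gObj := C, gArr := {f \<in> Ar. dm f \<in> C \<and> cd f \<in> C}\<rparr>)"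
  unfolding groupoid_def hom_def
  apply (intro conjI ballI impI)
  apply (auto simp: subset_iff idr idl)
  subgoal for f by (rule exI[of _ "ginv f"]) auto
  done

lemma full_sub_groupoid: "groupoid G \<Longrightarrow> C \<subseteq> gObj G \<Longrightarrow> groupoid (full_sub G C)"
  unfolding full_sub_def using gpdl.sub_groupoid[of G C] gpdl.intro by blast

lemma restrict_eq_pt: "(\<lambda>i\<in>I. a i) = (\<lambda>i\<in>I. b i) \<Longrightarrow> i \<in> I \<Longrightarrow> a i = b i"
  by (metis restrict_apply')

locale prodl =
  fixes I :: "'i set" and M :: "'i \<Rightarrow> ('a, 'b) mgpd"
  assumes tg: "\<And>i. i \<in> I \<Longrightarrow> two_group (M i)"
begin

abbreviation "P \<equiv> prod_mgpd I M"

lemma P_obj[simp]: "gObj P = (\<Pi>\<^sub>E i\<in>I. gObj (M i))" by (simp add: prod_mgpd_def)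
lemma P_arr[simp]: "gArr P = (\<Pi>\<^sub>E i\<in>I. gArr (M i))" by (simp add: prod_mgpd_def)
lemma P_dom[simp]: "gDom P f = (\<lambda>i\<in>I. gDom (M i) (f i))" by (simp add: prod_mgpd_def)
lemma P_cod[simp]: "gCod P f = (\<lambda>i\<in>I. gCod (M i) (f i))" by (simp add: prod_mgpd_def)
lemma P_comp[simp]: "gComp P g f = (\<lambda>i\<in>I. gComp (M i) (g i) (f i))" by (simp add: prod_mgpd_def)
lemma P_id[simp]: "gId P a = (\<lambda>i\<in>I. gId (M i) (a i))" by (simp add: prod_mgpd_def)
lemma P_t[simp]: "tens_o P a b = (\<lambda>i\<in>I. tens_o (M i) (a i) (b i))" by (simp add: prod_mgpd_def)
lemma P_tm[simp]: "tens_m P f g = (\<lambda>i\<in>I. tens_m (M i) (f i) (g i))" by (simp add: prod_mgpd_def)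
lemma P_u[simp]: "unit_o P = (\<lambda>i\<in>I. unit_o (M i))" by (simp add: prod_mgpd_def)
lemma P_as[simp]: "assoc_m P a b d = (\<lambda>i\<in>I. assoc_m (M i) (a i) (b i) (d i))" by (simp add: prod_mgpd_def)
lemma P_lu[simp]: "lunit_m P a = (\<lambda>i\<in>I. lunit_m (M i) (a i))" by (simp add: prod_mgpd_def)
lemma P_ru[simp]: "runit_m P a = (\<lambda>i\<in>I. runit_m (M i) (a i))" by (simp add: prod_mgpd_def)

lemma P_hom: "a \<in> extensional I \<Longrightarrow> b \<in> extensional I \<Longrightarrow>
  f \<in> hom P a b \<longleftrightarrow> f \<in> extensional I \<and> (\<forall>i\<in>I. f i \<in> hom (M i) (a i) (b i))"
  unfolding hom_def
  by (auto simp: PiE_iff intro: extensionalityI[of _ I] dest: restrict_eq_pt)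

lemma mg: "i \<in> I \<Longrightarrow> monoidal_groupoid (M i)" using tg two_group_def by blast
lemma gp: "i \<in> I \<Longrightarrow> groupoid (M i)" using mg[of i] unfolding monoidal_groupoid_def Let_def by blast
lemma gl[simp]: "i \<in> I \<Longrightarrow> gpdl (M i)" using gp gpdl.intro by blast

lemmas Msimps[simp] = gpdl.dm_ob gpdl.cd_ob gpdl.id_ar gpdl.dm_id gpdl.cd_id gpdl.cmp_ar gpdl.dm_cmp gpdl.cd_cmp
  gpdl.cmp_assoc gpdl.idr' gpdl.idl' gpdl.ginv_ar gpdl.dm_ginv gpdl.cd_ginv gpdl.ginv_l gpdl.ginv_r

lemma PiE_app: "f \<in> (\<Pi>\<^sub>E i\<in>I. A i) \<Longrightarrow> i \<in> I \<Longrightarrow> f i \<in> A i" by auto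

lemma P_groupoid: "groupoid P"
  unfolding groupoid_def
proof (intro conjI ballI impI)
  fix f assume f: "f \<in> gArr P"
  have fi: "i \<in> I \<Longrightarrow> f i \<in> gArr (M i)" for i using f by auto
  show "gDom P f \<in> gObj P" "gCod P f \<in> gObj P" using fi by auto
  show "gComp P f (gId P (gDom P f)) = f" "gComp P (gId P (gCod P f)) f = f"
    using f fi by (auto simp: PiE_iff intro!: extensionalityI[of _ I])
  let ?g = "\<lambda>i\<in>I. gpdl.ginv (M i) (f i)"
  show "\<exists>g\<in>hom P (gCod P f) (gDom P f). gComp P g f = gId P (gDom P f) \<and> gComp P f g = gId P (gCod P f)"
    apply (rule bexI[of _ ?g])
    using fi by (auto simp: P_hom hom_def intro!: restrict_ext)
next
  fix a assume "a \<in> gObj P" thus "gId P a \<in> hom P a a" by (auto simp: hom_def PiE_iff intro!: extensionalityI[of _ I])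
next
  fix f g assume f: "f \<in> gArr P" and g: "g \<in> gArr P" and e: "gCod P f = gDom P g"
  have e': "i \<in> I \<Longrightarrow> gCod (M i) (f i) = gDom (M i) (g i)" for i using restrict_eq_pt[OF e[simplified]] by blast
  show "gComp P g f \<in> hom P (gDom P f) (gCod P g)"
    using f g e' by (auto simp: hom_def PiE_iff intro!: restrict_ext)
next
  fix f g h assume f: "f \<in> gArr P" and g: "g \<in> gArr P" and h: "h \<in> gArr P"
    and e1: "gCod P f = gDom P g" and e2: "gCod P g = gDom P h"
  have e1': "i \<in> I \<Longrightarrow> gCod (M i) (f i) = gDom (M i) (g i)" for i using restrict_eq_pt[OF e1[simplified]] by blast
  have e2': "i \<in> I \<Longrightarrow> gCod (M i) (g i) = gDom (M i) (h i)" for i using restrict_eq_pt[OF e2[simplified]] by blast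
  show "gComp P h (gComp P g f) = gComp P (gComp P h g) f"
    unfolding P_comp using f g h e1' e2' by (intro restrict_ext) (auto simp: PiE_iff)
qed

end


locale mgl =
  fixes M :: "('a, 'b) mgpd"
  assumes mgM: "monoidal_groupoid M"
begin
lemma gM: "groupoid M" by (rule conjunct1[OF mgM[unfolded monoidal_groupoid_def Let_def]])
sublocale gpdl M by (rule gpdl.intro[OF gM])
lemmas mgc = mgM[unfolded monoidal_groupoid_def Let_def]
lemmas mc1 = mgc[THEN conjunct1]
lemmas mc2 = mgc[THEN conjunct2, THEN conjunct1]
lemmas mc3 = mgc[THEN conjunct2, THEN conjunct2, THEN conjunct1]
lemmas mc4 = mgc[THEN conjunct2, THEN conjunct2, THEN conjunct2, THEN conjunct1]
lemmas mc5 = mgc[THEN conjunct2, THEN conjunct2, THEN conjunct2, THEN conjunct2, THEN conjunct1]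
lemmas mc6 = mgc[THEN conjunct2, THEN conjunct2, THEN conjunct2, THEN conjunct2, THEN conjunct2, THEN conjunct1]
lemmas mc7 = mgc[THEN conjunct2, THEN conjunct2, THEN conjunct2, THEN conjunct2, THEN conjunct2, THEN conjunct2, THEN conjunct1]
lemmas mc8 = mgc[THEN conjunct2, THEN conjunct2, THEN conjunct2, THEN conjunct2, THEN conjunct2, THEN conjunct2, THEN conjunct2, THEN conjunct1]
lemmas mc9 = mgc[THEN conjunct2, THEN conjunct2, THEN conjunct2, THEN conjunct2, THEN conjunct2, THEN conjunct2, THEN conjunct2, THEN conjunct2, THEN conjunct1]
lemmas mc10 = mgc[THEN conjunct2, THEN conjunct2, THEN conjunct2, THEN conjunct2, THEN conjunct2, THEN conjunct2, THEN conjunct2, THEN conjunct2, THEN conjunct2, THEN conjunct1]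
lemmas mc11 = mgc[THEN conjunct2, THEN conjunct2, THEN conjunct2, THEN conjunct2, THEN conjunct2, THEN conjunct2, THEN conjunct2, THEN conjunct2, THEN conjunct2, THEN conjunct2, THEN conjunct1]
lemmas mc12 = mgc[THEN conjunct2, THEN conjunct2, THEN conjunct2, THEN conjunct2, THEN conjunct2, THEN conjunct2, THEN conjunct2, THEN conjunct2, THEN conjunct2, THEN conjunct2, THEN conjunct2, THEN conjunct1]
lemmas mc13 = mgc[THEN conjunct2, THEN conjunct2, THEN conjunct2, THEN conjunct2, THEN conjunct2, THEN conjunct2, THEN conjunct2, THEN conjunct2, THEN conjunct2, THEN conjunct2, THEN conjunct2, THEN conjunct2]


lemma t_ob[simp]: "a \<in> Ob \<Longrightarrow> b \<in> Ob \<Longrightarrow> tens_o M a b \<in> Ob"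
  using mc2 by blast
lemma tm_hom: "f \<in> Ar \<Longrightarrow> g \<in> Ar \<Longrightarrow> tens_m M f g \<in> hom M (tens_o M (dm f) (dm g)) (tens_o M (cd f) (cd g))"
  using mc3 by blast
lemma tm_ar[simp]: "f \<in> Ar \<Longrightarrow> g \<in> Ar \<Longrightarrow> tens_m M f g \<in> Ar" using tm_hom[of f g] unfolding hom_def by blast
lemma dm_tm[simp]: "f \<in> Ar \<Longrightarrow> g \<in> Ar \<Longrightarrow> dm (tens_m M f g) = tens_o M (dm f) (dm g)" using tm_hom[of f g] unfolding hom_def by blast
lemma cd_tm[simp]: "f \<in> Ar \<Longrightarrow> g \<in> Ar \<Longrightarrow> cd (tens_m M f g) = tens_o M (cd f) (cd g)" using tm_hom[of f g] unfolding hom_def by blast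
lemma tm_id[simp]: "a \<in> Ob \<Longrightarrow> b \<in> Ob \<Longrightarrow> tens_m M (idt a) (idt b) = idt (tens_o M a b)"
  using mc5 by blast
lemma u_ob[simp]: "unit_o M \<in> Ob" using mc6 by blast
lemma as_hom: "a \<in> Ob \<Longrightarrow> b \<in> Ob \<Longrightarrow> d \<in> Ob \<Longrightarrow> assoc_m M a b d \<in> hom M (tens_o M (tens_o M a b) d) (tens_o M a (tens_o M b d))"
  using mc7 by blast
lemma lu_hom: "a \<in> Ob \<Longrightarrow> lunit_m M a \<in> hom M (tens_o M (unit_o M) a) a"
  using mc8 by blast
lemma ru_hom: "a \<in> Ob \<Longrightarrow> runit_m M a \<in> hom M (tens_o M a (unit_o M)) a"
  using mc8 by blast
lemma as_ar[simp]: "a \<in> Ob \<Longrightarrow> b \<in> Ob \<Longrightarrow> d \<in> Ob \<Longrightarrow> assoc_m M a b d \<in> Ar" using as_hom[of a b d] unfolding hom_def by blast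
lemma dm_as[simp]: "a \<in> Ob \<Longrightarrow> b \<in> Ob \<Longrightarrow> d \<in> Ob \<Longrightarrow> dm (assoc_m M a b d) = tens_o M (tens_o M a b) d" using as_hom[of a b d] unfolding hom_def by blast
lemma cd_as[simp]: "a \<in> Ob \<Longrightarrow> b \<in> Ob \<Longrightarrow> d \<in> Ob \<Longrightarrow> cd (assoc_m M a b d) = tens_o M a (tens_o M b d)" using as_hom[of a b d] unfolding hom_def by blast
lemma lu_ar[simp]: "a \<in> Ob \<Longrightarrow> lunit_m M a \<in> Ar" using lu_hom[of a] unfolding hom_def by blast
lemma dm_lu[simp]: "a \<in> Ob \<Longrightarrow> dm (lunit_m M a) = tens_o M (unit_o M) a" using lu_hom[of a] unfolding hom_def by blast
lemma cd_lu[simp]: "a \<in> Ob \<Longrightarrow> cd (lunit_m M a) = a" using lu_hom[of a] unfolding hom_def by blast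
lemma ru_ar[simp]: "a \<in> Ob \<Longrightarrow> runit_m M a \<in> Ar" using ru_hom[of a] unfolding hom_def by blast
lemma dm_ru[simp]: "a \<in> Ob \<Longrightarrow> dm (runit_m M a) = tens_o M a (unit_o M)" using ru_hom[of a] unfolding hom_def by blast
lemma cd_ru[simp]: "a \<in> Ob \<Longrightarrow> cd (runit_m M a) = a" using ru_hom[of a] unfolding hom_def by blast

lemma interchange: "f \<in> Ar \<Longrightarrow> f' \<in> Ar \<Longrightarrow> g \<in> Ar \<Longrightarrow> g' \<in> Ar \<Longrightarrow> cd f = dm f' \<Longrightarrow> cd g = dm g' \<Longrightarrow>
   tens_m M (cmp f' f) (cmp g' g) = cmp (tens_m M f' g') (tens_m M f g)"
  using mc4 by blast
lemma asnat: "f \<in> Ar \<Longrightarrow> g \<in> Ar \<Longrightarrow> h \<in> Ar \<Longrightarrow>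
   cmp (assoc_m M (cd f) (cd g) (cd h)) (tens_m M (tens_m M f g) h) = cmp (tens_m M f (tens_m M g h)) (assoc_m M (dm f) (dm g) (dm h))"
  using mc9 by blast
lemma lunat: "f \<in> Ar \<Longrightarrow> cmp (lunit_m M (cd f)) (tens_m M (idt (unit_o M)) f) = cmp f (lunit_m M (dm f))"
  using mc10 by blast
lemma runat: "f \<in> Ar \<Longrightarrow> cmp (runit_m M (cd f)) (tens_m M f (idt (unit_o M))) = cmp f (runit_m M (dm f))"
  using mc11 by blast
lemma pent: "a \<in> Ob \<Longrightarrow> b \<in> Ob \<Longrightarrow> d \<in> Ob \<Longrightarrow> e \<in> Ob \<Longrightarrow>
  cmp (tens_m M (idt a) (assoc_m M b d e)) (cmp (assoc_m M a (tens_o M b d) e) (tens_m M (assoc_m M a b d) (idt e)))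
  = cmp (assoc_m M a b (tens_o M d e)) (assoc_m M (tens_o M a b) d e)"
  using mc12 by blast
lemma tri: "a \<in> Ob \<Longrightarrow> b \<in> Ob \<Longrightarrow>
  cmp (tens_m M (idt a) (lunit_m M b)) (assoc_m M a (unit_o M) b) = tens_m M (runit_m M a) (idt b)"
  using mc13 by blast
end



context prodl begin

lemma ml[simp]: "i \<in> I \<Longrightarrow> mgl (M i)" using mg mgl.intro by blast


lemma L_t: "i \<in> I \<Longrightarrow> a \<in> gObj (M i) \<Longrightarrow> b \<in> gObj (M i) \<Longrightarrow> tens_o (M i) a b \<in> gObj (M i)"
  by (rule mgl.t_ob[OF ml])
lemma L_tm: "i \<in> I \<Longrightarrow> f \<in> gArr (M i) \<Longrightarrow> g \<in> gArr (M i) \<Longrightarrow>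
  tens_m (M i) f g \<in> hom (M i) (tens_o (M i) (gDom (M i) f) (gDom (M i) g)) (tens_o (M i) (gCod (M i) f) (gCod (M i) g))"
  by (rule mgl.tm_hom[OF ml])
lemma L_inter: "i \<in> I \<Longrightarrow> f \<in> gArr (M i) \<Longrightarrow> f' \<in> gArr (M i) \<Longrightarrow> g \<in> gArr (M i) \<Longrightarrow> g' \<in> gArr (M i) \<Longrightarrow>
   gCod (M i) f = gDom (M i) f' \<Longrightarrow> gCod (M i) g = gDom (M i) g' \<Longrightarrow>
   tens_m (M i) (gComp (M i) f' f) (gComp (M i) g' g) = gComp (M i) (tens_m (M i) f' g') (tens_m (M i) f g)"
  by (rule mgl.interchange[OF ml])
lemma L_tid: "i \<in> I \<Longrightarrow> a \<in> gObj (M i) \<Longrightarrow> b \<in> gObj (M i) \<Longrightarrow>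
   tens_m (M i) (gId (M i) a) (gId (M i) b) = gId (M i) (tens_o (M i) a b)"
  by (rule mgl.tm_id[OF ml])
lemma L_u: "i \<in> I \<Longrightarrow> unit_o (M i) \<in> gObj (M i)"
  by (rule mgl.u_ob[OF ml])
lemma L_as: "i \<in> I \<Longrightarrow> a \<in> gObj (M i) \<Longrightarrow> b \<in> gObj (M i) \<Longrightarrow> d \<in> gObj (M i) \<Longrightarrow>
   assoc_m (M i) a b d \<in> hom (M i) (tens_o (M i) (tens_o (M i) a b) d) (tens_o (M i) a (tens_o (M i) b d))"
  by (rule mgl.as_hom[OF ml])
lemma L_lu: "i \<in> I \<Longrightarrow> a \<in> gObj (M i) \<Longrightarrow> lunit_m (M i) a \<in> hom (M i) (tens_o (M i) (unit_o (M i)) a) a"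
  by (rule mgl.lu_hom[OF ml])
lemma L_ru: "i \<in> I \<Longrightarrow> a \<in> gObj (M i) \<Longrightarrow> runit_m (M i) a \<in> hom (M i) (tens_o (M i) a (unit_o (M i))) a"
  by (rule mgl.ru_hom[OF ml])
lemma L_asnat: "i \<in> I \<Longrightarrow> f \<in> gArr (M i) \<Longrightarrow> g \<in> gArr (M i) \<Longrightarrow> h \<in> gArr (M i) \<Longrightarrow>
   gComp (M i) (assoc_m (M i) (gCod (M i) f) (gCod (M i) g) (gCod (M i) h)) (tens_m (M i) (tens_m (M i) f g) h)
   = gComp (M i) (tens_m (M i) f (tens_m (M i) g h)) (assoc_m (M i) (gDom (M i) f) (gDom (M i) g) (gDom (M i) h))"
  by (rule mgl.asnat[OF ml])
lemma L_lunat: "i \<in> I \<Longrightarrow> f \<in> gArr (M i) \<Longrightarrow>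
   gComp (M i) (lunit_m (M i) (gCod (M i) f)) (tens_m (M i) (gId (M i) (unit_o (M i))) f) = gComp (M i) f (lunit_m (M i) (gDom (M i) f))"
  by (rule mgl.lunat[OF ml])
lemma L_runat: "i \<in> I \<Longrightarrow> f \<in> gArr (M i) \<Longrightarrow>
   gComp (M i) (runit_m (M i) (gCod (M i) f)) (tens_m (M i) f (gId (M i) (unit_o (M i)))) = gComp (M i) f (runit_m (M i) (gDom (M i) f))"
  by (rule mgl.runat[OF ml])
lemma L_pent: "i \<in> I \<Longrightarrow> a \<in> gObj (M i) \<Longrightarrow> b \<in> gObj (M i) \<Longrightarrow> d \<in> gObj (M i) \<Longrightarrow> e \<in> gObj (M i) \<Longrightarrow>
  gComp (M i) (tens_m (M i) (gId (M i) a) (assoc_m (M i) b d e)) (gComp (M i) (assoc_m (M i) a (tens_o (M i) b d) e) (tens_m (M i) (assoc_m (M i) a b d) (gId (M i) e)))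
  = gComp (M i) (assoc_m (M i) a b (tens_o (M i) d e)) (assoc_m (M i) (tens_o (M i) a b) d e)"
  by (rule mgl.pent[OF ml])
lemma L_tri: "i \<in> I \<Longrightarrow> a \<in> gObj (M i) \<Longrightarrow> b \<in> gObj (M i) \<Longrightarrow>
  gComp (M i) (tens_m (M i) (gId (M i) a) (lunit_m (M i) b)) (assoc_m (M i) a (unit_o (M i)) b) = tens_m (M i) (runit_m (M i) a) (gId (M i) b)"
  by (rule mgl.tri[OF ml])

lemma L_tm_ar: "i \<in> I \<Longrightarrow> f \<in> gArr (M i) \<Longrightarrow> g \<in> gArr (M i) \<Longrightarrow> tens_m (M i) f g \<in> gArr (M i)"
  by (rule mgl.tm_ar[OF ml])
lemma L_tm_dom: "i \<in> I \<Longrightarrow> f \<in> gArr (M i) \<Longrightarrow> g \<in> gArr (M i) \<Longrightarrow> gDom (M i) (tens_m (M i) f g) = tens_o (M i) (gDom (M i) f) (gDom (M i) g)"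
  by (rule mgl.dm_tm[OF ml])
lemma L_tm_cod: "i \<in> I \<Longrightarrow> f \<in> gArr (M i) \<Longrightarrow> g \<in> gArr (M i) \<Longrightarrow> gCod (M i) (tens_m (M i) f g) = tens_o (M i) (gCod (M i) f) (gCod (M i) g)"
  by (rule mgl.cd_tm[OF ml])

lemma P_monoidal: "monoidal_groupoid P"
  unfolding monoidal_groupoid_def Let_def
proof (intro conjI ballI impI)
  show "groupoid P" by (rule P_groupoid)
  show "unit_o P \<in> gObj P" using L_u by auto
next
  fix a b assume a: "a \<in> gObj P" and b: "b \<in> gObj P"
  show "tens_o P a b \<in> gObj P" using a b by (auto simp: PiE_iff intro: L_t)
  show "tens_m P (gId P a) (gId P b) = gId P (tens_o P a b)"
    using a b by (auto intro!: restrict_ext simp: L_tid PiE_iff)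
  show "gComp P (tens_m P (gId P a) (lunit_m P b)) (assoc_m P a (unit_o P) b) = tens_m P (runit_m P a) (gId P b)"
    using a b by (auto intro!: restrict_ext simp: L_tri PiE_iff)
next
  fix f g assume f: "f \<in> gArr P" and g: "g \<in> gArr P"
  show "tens_m P f g \<in> hom P (tens_o P (gDom P f) (gDom P g)) (tens_o P (gCod P f) (gCod P g))"
    using f g L_tm by (subst P_hom) (auto simp: PiE_iff)
next
  fix f f' g g' assume f: "f \<in> gArr P" and f': "f' \<in> gArr P" and g: "g \<in> gArr P" and g': "g' \<in> gArr P"
    and e1: "gCod P f = gDom P f'" and e2: "gCod P g = gDom P g'"
  have e1': "i \<in> I \<Longrightarrow> gCod (M i) (f i) = gDom (M i) (f' i)" for i using restrict_eq_pt[OF e1[simplified]] by blast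
  have e2': "i \<in> I \<Longrightarrow> gCod (M i) (g i) = gDom (M i) (g' i)" for i using restrict_eq_pt[OF e2[simplified]] by blast
  show "tens_m P (gComp P f' f) (gComp P g' g) = gComp P (tens_m P f' g') (tens_m P f g)"
    unfolding P_comp P_tm using f f' g g' e1' e2' by (intro restrict_ext) (auto simp: L_inter PiE_iff)
next
  fix a b d assume a: "a \<in> gObj P" and b: "b \<in> gObj P" and d: "d \<in> gObj P"
  show "assoc_m P a b d \<in> hom P (tens_o P (tens_o P a b) d) (tens_o P a (tens_o P b d))"
    using a b d L_as L_t by (subst P_hom) (auto simp: PiE_iff)
next
  fix a assume a: "a \<in> gObj P"
  show "lunit_m P a \<in> hom P (tens_o P (unit_o P) a) a" using a L_lu L_u by (subst P_hom) (auto simp: PiE_iff)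
  show "runit_m P a \<in> hom P (tens_o P a (unit_o P)) a" using a L_ru L_u by (subst P_hom) (auto simp: PiE_iff)
next
  fix f g h assume f: "f \<in> gArr P" and g: "g \<in> gArr P" and h: "h \<in> gArr P"
  show "gComp P (assoc_m P (gCod P f) (gCod P g) (gCod P h)) (tens_m P (tens_m P f g) h) =
         gComp P (tens_m P f (tens_m P g h)) (assoc_m P (gDom P f) (gDom P g) (gDom P h))"
    unfolding P_comp P_tm P_as P_dom P_cod using f g h by (intro restrict_ext) (auto simp: L_asnat L_tm_ar PiE_iff)
next
  fix f assume f: "f \<in> gArr P"
  show "gComp P (lunit_m P (gCod P f)) (tens_m P (gId P (unit_o P)) f) = gComp P f (lunit_m P (gDom P f))"
    unfolding P_comp P_tm P_lu P_dom P_cod P_id P_u using f by (intro restrict_ext) (auto simp: L_lunat L_u PiE_iff)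
  show "gComp P (runit_m P (gCod P f)) (tens_m P f (gId P (unit_o P))) = gComp P f (runit_m P (gDom P f))"
    unfolding P_comp P_tm P_ru P_dom P_cod P_id P_u using f by (intro restrict_ext) (auto simp: L_runat L_u PiE_iff)
next
  fix a b d e assume a: "a \<in> gObj P" and b: "b \<in> gObj P" and d: "d \<in> gObj P" and e: "e \<in> gObj P"
  show "gComp P (tens_m P (gId P a) (assoc_m P b d e)) (gComp P (assoc_m P a (tens_o P b d) e) (tens_m P (assoc_m P a b d) (gId P e)))
        = gComp P (assoc_m P a b (tens_o P d e)) (assoc_m P (tens_o P a b) d e)"
    unfolding P_comp P_tm P_as P_id P_t using a b d e by (intro restrict_ext) (auto simp: L_pent PiE_iff)
qed

lemma P_two_group: "two_group P"
  unfolding two_group_def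
proof (intro conjI ballI)
  show "monoidal_groupoid P" by (rule P_monoidal)
  fix a assume a: "a \<in> gObj P"
  have ex: "\<exists>b. b \<in> gObj (M i) \<and> hom (M i) (tens_o (M i) (a i) b) (unit_o (M i)) \<noteq> {} \<and>
         hom (M i) (tens_o (M i) b (a i)) (unit_o (M i)) \<noteq> {}" if i: "i \<in> I" for i
    using tg[OF i] a i unfolding two_group_def PiE_iff P_obj by blast
  define b where "b = (\<lambda>i\<in>I. SOME b. b \<in> gObj (M i) \<and> hom (M i) (tens_o (M i) (a i) b) (unit_o (M i)) \<noteq> {} \<and>
         hom (M i) (tens_o (M i) b (a i)) (unit_o (M i)) \<noteq> {})"
  have bi: "b i \<in> gObj (M i) \<and> hom (M i) (tens_o (M i) (a i) (b i)) (unit_o (M i)) \<noteq> {} \<and>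
         hom (M i) (tens_o (M i) (b i) (a i)) (unit_o (M i)) \<noteq> {}" if i: "i \<in> I" for i
    using someI_ex[OF ex[OF i]] i unfolding b_def by simp
  define h1 where "h1 = (\<lambda>i\<in>I. SOME h. h \<in> hom (M i) (tens_o (M i) (a i) (b i)) (unit_o (M i)))"
  define h2 where "h2 = (\<lambda>i\<in>I. SOME h. h \<in> hom (M i) (tens_o (M i) (b i) (a i)) (unit_o (M i)))"
  have "h1 \<in> hom P (tens_o P a b) (unit_o P)"
    apply (subst P_hom) using bi by (auto simp: h1_def some_in_eq)
  moreover have "h2 \<in> hom P (tens_o P b a) (unit_o P)"
    apply (subst P_hom) using bi by (auto simp: h2_def some_in_eq)
  moreover have "b \<in> gObj P" using bi by (auto simp: b_def PiE_iff)
  ultimately show "\<exists>b\<in>gObj P. hom P (tens_o P a b) (unit_o P) \<noteq> {} \<and> hom P (tens_o P b a) (unit_o P) \<noteq> {}"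
    by blast
qed

end


definition strict_mf :: "('a, 'b) mgpd \<Rightarrow> ('c, 'd) mgpd \<Rightarrow> ('a \<Rightarrow> 'c) \<times> ('b \<Rightarrow> 'd) \<Rightarrow> bool" where
  "strict_mf M N F \<longleftrightarrow> gfunctor M N F \<and>
    (\<forall>a\<in>gObj M. \<forall>b\<in>gObj M. fst F (tens_o M a b) = tens_o N (fst F a) (fst F b)) \<and>
    (\<forall>f\<in>gArr M. \<forall>g\<in>gArr M. snd F (tens_m M f g) = tens_m N (snd F f) (snd F g)) \<and>
    fst F (unit_o M) = unit_o N \<and>
    (\<forall>a\<in>gObj M. \<forall>b\<in>gObj M. \<forall>d\<in>gObj M. snd F (assoc_m M a b d) = assoc_m N (fst F a) (fst F b) (fst F d)) \<and>
    (\<forall>a\<in>gObj M. snd F (lunit_m M a) = lunit_m N (fst F a)) \<and>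
    (\<forall>a\<in>gObj M. snd F (runit_m M a) = runit_m N (fst F a))"

lemma strict_mf_mf:
  assumes M: "monoidal_groupoid M" and N: "monoidal_groupoid N" and F: "strict_mf M N F"
  shows "monoidal_functor M N F (\<lambda>a b. gId N (tens_o N (fst F a) (fst F b))) (gId N (unit_o N))"
proof -
  interpret m: mgl M by (rule mgl.intro[OF M])
  interpret n: mgl N by (rule mgl.intro[OF N])
  have Fu: "gfunctor M N F" using F strict_mf_def by blast
  have Fo[simp]: "a \<in> gObj M \<Longrightarrow> fst F a \<in> gObj N" for a using Fu unfolding gfunctor_def by blast
  have Fa[simp]: "f \<in> gArr M \<Longrightarrow> snd F f \<in> gArr N" for f using Fu unfolding gfunctor_def hom_def by blast
  have Fd[simp]: "f \<in> gArr M \<Longrightarrow> gDom N (snd F f) = fst F (gDom M f)" for f using Fu unfolding gfunctor_def hom_def by blast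
  have Fc[simp]: "f \<in> gArr M \<Longrightarrow> gCod N (snd F f) = fst F (gCod M f)" for f using Fu unfolding gfunctor_def hom_def by blast
  have st[simp]: "a \<in> gObj M \<Longrightarrow> b \<in> gObj M \<Longrightarrow> fst F (tens_o M a b) = tens_o N (fst F a) (fst F b)"
    "f \<in> gArr M \<Longrightarrow> g \<in> gArr M \<Longrightarrow> snd F (tens_m M f g) = tens_m N (snd F f) (snd F g)"
    "fst F (unit_o M) = unit_o N"
    "a \<in> gObj M \<Longrightarrow> b \<in> gObj M \<Longrightarrow> d \<in> gObj M \<Longrightarrow> snd F (assoc_m M a b d) = assoc_m N (fst F a) (fst F b) (fst F d)"
    "a \<in> gObj M \<Longrightarrow> snd F (lunit_m M a) = lunit_m N (fst F a)"
    "a \<in> gObj M \<Longrightarrow> snd F (runit_m M a) = runit_m N (fst F a)" for a b d f g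
    using F unfolding strict_mf_def by auto
  show ?thesis
    unfolding monoidal_functor_def Let_def
    by (intro conjI ballI Fu) (auto simp: hom_def)
qed

lemma strict_mf_inv:
  assumes M: "monoidal_groupoid M" and N: "monoidal_groupoid N" and F: "strict_mf M N F"
    and Ke1: "fst K \<in> extensional (gObj N)" and Ke2: "snd K \<in> extensional (gArr N)"
    and Ko: "\<And>b. b \<in> gObj N \<Longrightarrow> fst K b \<in> gObj M" and Ka: "\<And>g. g \<in> gArr N \<Longrightarrow> snd K g \<in> gArr M"
    and r1: "\<And>a. a \<in> gObj M \<Longrightarrow> fst K (fst F a) = a" and r2: "\<And>f. f \<in> gArr M \<Longrightarrow> snd K (snd F f) = f"
    and r3: "\<And>b. b \<in> gObj N \<Longrightarrow> fst F (fst K b) = b" and r4: "\<And>g. g \<in> gArr N \<Longrightarrow> snd F (snd K g) = g"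
  shows "strict_mf N M K"
proof -
  interpret m: mgl M by (rule mgl.intro[OF M])
  interpret n: mgl N by (rule mgl.intro[OF N])
  have Fu: "gfunctor M N F" using F strict_mf_def by blast
  have Fo[simp]: "a \<in> gObj M \<Longrightarrow> fst F a \<in> gObj N" for a using Fu unfolding gfunctor_def by blast
  have Fa[simp]: "f \<in> gArr M \<Longrightarrow> snd F f \<in> gArr N" for f using Fu unfolding gfunctor_def hom_def by blast
  have Fd[simp]: "f \<in> gArr M \<Longrightarrow> gDom N (snd F f) = fst F (gDom M f)" for f using Fu unfolding gfunctor_def hom_def by blast
  have Fc[simp]: "f \<in> gArr M \<Longrightarrow> gCod N (snd F f) = fst F (gCod M f)" for f using Fu unfolding gfunctor_def hom_def by blast
  have Fcmp: "f \<in> gArr M \<Longrightarrow> g \<in> gArr M \<Longrightarrow> gCod M f = gDom M g \<Longrightarrow> snd F (gComp M g f) = gComp N (snd F g) (snd F f)" for f g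
    using Fu unfolding gfunctor_def by blast
  have Fid: "a \<in> gObj M \<Longrightarrow> snd F (gId M a) = gId N (fst F a)" for a using Fu unfolding gfunctor_def by blast
  have st: "a \<in> gObj M \<Longrightarrow> b \<in> gObj M \<Longrightarrow> fst F (tens_o M a b) = tens_o N (fst F a) (fst F b)"
    "f \<in> gArr M \<Longrightarrow> g \<in> gArr M \<Longrightarrow> snd F (tens_m M f g) = tens_m N (snd F f) (snd F g)"
    "fst F (unit_o M) = unit_o N"
    "a \<in> gObj M \<Longrightarrow> b \<in> gObj M \<Longrightarrow> d \<in> gObj M \<Longrightarrow> snd F (assoc_m M a b d) = assoc_m N (fst F a) (fst F b) (fst F d)"
    "a \<in> gObj M \<Longrightarrow> snd F (lunit_m M a) = lunit_m N (fst F a)"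
    "a \<in> gObj M \<Longrightarrow> snd F (runit_m M a) = runit_m N (fst F a)" for a b d f g
    using F unfolding strict_mf_def by auto
  have Kd: "gDom M (snd K g) = fst K (gDom N g)" if g: "g \<in> gArr N" for g
    by (metis Fd Ka g r1 r4 m.dm_ob)
  have Kc: "gCod M (snd K g) = fst K (gCod N g)" if g: "g \<in> gArr N" for g
    by (metis Fc Ka g r1 r4 m.cd_ob)
  have "gfunctor N M K"
    unfolding gfunctor_def
  proof (intro conjI ballI impI Ke1 Ke2 Ko)
    fix f assume f: "f \<in> gArr N"
    show "snd K f \<in> hom M (fst K (gDom N f)) (fst K (gCod N f))" using f Ka Kd Kc by (simp add: hom_def)
  next
    fix f g assume f: "f \<in> gArr N" and g: "g \<in> gArr N" and e: "gCod N f = gDom N g"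
    have e': "gCod M (snd K f) = gDom M (snd K g)" using e Kd Kc f g by simp
    have "snd K (gComp N g f) = snd K (gComp N (snd F (snd K g)) (snd F (snd K f)))" using r4 f g by simp
    also have "\<dots> = snd K (snd F (gComp M (snd K g) (snd K f)))" using Fcmp[OF Ka[OF f] Ka[OF g] e'] by simp
    also have "\<dots> = gComp M (snd K g) (snd K f)" using r2 e' f g Ka by simp
    finally show "snd K (gComp N g f) = gComp M (snd K g) (snd K f)" .
  next
    fix a assume a: "a \<in> gObj N"
    have "snd K (gId N a) = snd K (gId N (fst F (fst K a)))" using r3 a by simp
    also have "\<dots> = snd K (snd F (gId M (fst K a)))" using Fid Ko a by simp
    also have "\<dots> = gId M (fst K a)" using r2 Ko a by simp
    finally show "snd K (gId N a) = gId M (fst K a)" .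
  qed
  moreover have "fst K (tens_o N a b) = tens_o M (fst K a) (fst K b)" if "a \<in> gObj N" "b \<in> gObj N" for a b
    by (metis r1 r3 st(1) Ko m.t_ob that)
  moreover have "snd K (tens_m N f g) = tens_m M (snd K f) (snd K g)" if "f \<in> gArr N" "g \<in> gArr N" for f g
    by (metis r2 r4 st(2) Ka m.tm_ar that)
  moreover have "fst K (unit_o N) = unit_o M" by (metis r1 st(3) m.u_ob)
  moreover have "snd K (assoc_m N a b d) = assoc_m M (fst K a) (fst K b) (fst K d)" if "a \<in> gObj N" "b \<in> gObj N" "d \<in> gObj N" for a b d
    by (metis r2 r3 st(4) Ko m.as_ar that)
  moreover have "snd K (lunit_m N a) = lunit_m M (fst K a)" if "a \<in> gObj N" for a
    by (metis r2 r3 st(5) Ko m.lu_ar that)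
  moreover have "snd K (runit_m N a) = runit_m M (fst K a)" if "a \<in> gObj N" for a
    by (metis r2 r3 st(6) Ko m.ru_ar that)
  ultimately show ?thesis unfolding strict_mf_def by blast
qed



lemma iso_sym_gen:
  assumes "h \<in> iso A B" and cl: "\<And>a b. a \<in> carrier A \<Longrightarrow> b \<in> carrier A \<Longrightarrow> a \<otimes>\<^bsub>A\<^esub> b \<in> carrier A"
  shows "B \<cong> A"
proof -
  have h: "h \<in> Group.hom A B" "bij_betw h (carrier A) (carrier B)"
    using assms by (auto simp add: iso_def)
  then have HG: "bij_betw (inv_into (carrier A) h) (carrier B) (carrier A)"
    by (simp add: bij_betw_inv_into)
  have *: "\<And>x. x \<in> carrier B \<Longrightarrow> inv_into (carrier A) h x \<in> carrier A"
    by (meson HG bij_betwE)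
  have hm: "\<And>a b. a \<in> carrier A \<Longrightarrow> b \<in> carrier A \<Longrightarrow> h (a \<otimes>\<^bsub>A\<^esub> b) = h a \<otimes>\<^bsub>B\<^esub> h b"
    using h(1) unfolding Group.hom_def by blast
  have "inv_into (carrier A) h \<in> Group.hom B A"
    unfolding Group.hom_def
  proof (intro CollectI conjI ballI)
    show "inv_into (carrier A) h \<in> carrier B \<rightarrow> carrier A" using * by blast
    fix x y assume that: "x \<in> carrier B" "y \<in> carrier B"
    show "inv_into (carrier A) h (x \<otimes>\<^bsub>B\<^esub> y) = inv_into (carrier A) h x \<otimes>\<^bsub>A\<^esub> inv_into (carrier A) h y"
    proof (rule inv_into_f_eq)
      show "inj_on h (carrier A)"
        using bij_betw_def h(2) by blast
      show "inv_into (carrier A) h x \<otimes>\<^bsub>A\<^esub> inv_into (carrier A) h y \<in> carrier A"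
        by (simp add: * cl that)
      show "h (inv_into (carrier A) h x \<otimes>\<^bsub>A\<^esub> inv_into (carrier A) h y) = x \<otimes>\<^bsub>B\<^esub> y"
        using h bij_betw_inv_into_right [of h] by (simp add: "*" that hm)
    qed
  qed
  then show ?thesis
    unfolding is_iso_def iso_def using HG by blast
qed

context gpdu begin

lemma aut_carrier[simp]: "carrier (aut G x) = hom G x x" by (simp add: aut_def)
lemma aut_mult[simp]: "mult (aut G x) = cmp" by (simp add: aut_def)

lemma aut_cl: "a \<in> carrier (aut G x) \<Longrightarrow> b \<in> carrier (aut G x) \<Longrightarrow> a \<otimes>\<^bsub>aut G x\<^esub> b \<in> carrier (aut G x)"
  by (simp add: hom_iff)

lemma aut_sym: "aut G x \<cong> aut G y \<Longrightarrow> aut G y \<cong> aut G x"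
  unfolding is_iso_def using iso_sym_gen[OF _ aut_cl] unfolding is_iso_def by blast

lemma conj_iso:
  assumes f: "f \<in> hom G x y"
  shows "aut G x \<cong> aut G y"
proof -
  have fa: "f \<in> Ar" "dm f = x" "cd f = y" using f hom_iff by auto
  let ?h = "\<lambda>g. cmp f (cmp g (ginv f))"
  have "?h \<in> iso (aut G x) (aut G y)"
  proof (rule isoI)
    show "?h \<in> Group.hom (aut G x) (aut G y)"
      unfolding Group.hom_def using fa by (auto simp: hom_iff)
    show "bij_betw ?h (carrier (aut G x)) (carrier (aut G y))"
    proof (rule bij_betwI[where g = "\<lambda>g. cmp (ginv f) (cmp g f)"])
      show "?h \<in> carrier (aut G x) \<rightarrow> carrier (aut G y)" using fa by (auto simp: hom_iff)
      show "(\<lambda>g. cmp (ginv f) (cmp g f)) \<in> carrier (aut G y) \<rightarrow> carrier (aut G x)" using fa by (auto simp: hom_iff)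
      fix g assume "g \<in> carrier (aut G x)"
      thus "cmp (ginv f) (cmp (cmp f (cmp g (ginv f))) f) = g" using fa by (auto simp: hom_iff)
    next
      fix g assume "g \<in> carrier (aut G y)"
      thus "cmp f (cmp (cmp (ginv f) (cmp g f)) (ginv f)) = g" using fa by (auto simp: hom_iff)
    qed
  qed
  thus ?thesis by (rule is_isoI)
qed

definition hcx where "hcx x = {z \<in> Ob. aut G z \<cong> aut G x}"

lemma homog_eq: "homog_components G = hcx ` Ob"
proof -
  have "\<Union>{conn_component G y | y. y \<in> Ob \<and> aut G y \<cong> aut G x} = hcx x" if x: "x \<in> Ob" for x
  proof
    show "\<Union>{conn_component G y | y. y \<in> Ob \<and> aut G y \<cong> aut G x} \<subseteq> hcx x"
    proof
      fix z assume "z \<in> \<Union>{conn_component G y | y. y \<in> Ob \<and> aut G y \<cong> aut G x}"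
      then obtain y f where y: "y \<in> Ob" "aut G y \<cong> aut G x" and z: "z \<in> Ob" and f: "f \<in> hom G y z"
        unfolding conn_component_def by blast
      have "aut G z \<cong> aut G y" using conj_iso[OF f] aut_sym by blast
      thus "z \<in> hcx x" using z y iso_trans unfolding hcx_def by blast
    qed
  next
    show "hcx x \<subseteq> \<Union>{conn_component G y | y. y \<in> Ob \<and> aut G y \<cong> aut G x}"
    proof
      fix z assume z: "z \<in> hcx x"
      hence zo: "z \<in> Ob" unfolding hcx_def by blast
      hence "idt z \<in> hom G z z" by (simp add: hom_iff)
      hence "z \<in> conn_component G z" unfolding conn_component_def using zo by blast
      thus "z \<in> \<Union>{conn_component G y | y. y \<in> Ob \<and> aut G y \<cong> aut G x}" using z unfolding hcx_def by blast
    qed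
  qed
  hence eq: "\<And>x. x \<in> Ob \<Longrightarrow> \<Union>{conn_component G y | y. y \<in> Ob \<and> aut G y \<cong> aut G x} = hcx x" by blast
  have "{\<Union>{conn_component G y | y. y \<in> Ob \<and> aut G y \<cong> aut G x} | x. x \<in> Ob} = {hcx x | x. x \<in> Ob}"
    using eq by (intro Collect_cong) (metis (no_types, lifting))
  thus ?thesis unfolding homog_components_def by (simp add: image_def Bex_def) blast
qed

lemma hcx_sub: "hcx x \<subseteq> Ob" unfolding hcx_def by blast
lemma hcx_self: "x \<in> Ob \<Longrightarrow> x \<in> hcx x" unfolding hcx_def by auto
lemma hcx_eq: "z \<in> hcx x \<Longrightarrow> hcx z = hcx x"
  unfolding hcx_def using iso_trans aut_sym by blast

lemma homog_sub: "C \<in> homog_components G \<Longrightarrow> C \<subseteq> Ob" using homog_eq hcx_sub by auto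
lemma homog_of: "a \<in> Ob \<Longrightarrow> hcx a \<in> homog_components G" using homog_eq by auto
lemma homog_mem: "C \<in> homog_components G \<Longrightarrow> a \<in> C \<Longrightarrow> hcx a = C" using homog_eq hcx_eq by auto

lemma homog_arr: "C \<in> homog_components G \<Longrightarrow> f \<in> Ar \<Longrightarrow> dm f \<in> C \<Longrightarrow> cd f \<in> C"
proof -
  assume C: "C \<in> homog_components G" and f: "f \<in> Ar" and d: "dm f \<in> C"
  have "aut G (cd f) \<cong> aut G (dm f)" using conj_iso[of f] f aut_sym by (simp add: hom_iff)
  hence "cd f \<in> hcx (dm f)" using f unfolding hcx_def by simp
  thus ?thesis using homog_mem[OF C d] by simp
qed

lemma homog_arr': "C \<in> homog_components G \<Longrightarrow> f \<in> Ar \<Longrightarrow> cd f \<in> C \<Longrightarrow> dm f \<in> C"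
proof -
  assume C: "C \<in> homog_components G" and f: "f \<in> Ar" and d: "cd f \<in> C"
  have "aut G (dm f) \<cong> aut G (cd f)" using conj_iso[of f] f by (simp add: hom_iff)
  hence "dm f \<in> hcx (cd f)" using f unfolding hcx_def by simp
  thus ?thesis using homog_mem[OF C d] by simp
qed

lemma se_aut:
  assumes F: "self_equiv G F" and z: "z \<in> Ob"
  shows "aut G z \<cong> aut G (fst F z)"
proof -
  obtain K where K: "self_equiv G K" "\<exists>\<eta>. nat_trans G G (comp_functor G K F) (id_functor G) \<eta>"
     "\<exists>\<theta>. nat_trans G G (comp_functor G F K) (id_functor G) \<theta>" using se_qinv[OF F] by blast
  obtain \<eta> \<theta> where e: "nat_trans G G (comp_functor G K F) (id_functor G) \<eta>"
     and t: "nat_trans G G (comp_functor G F K) (id_functor G) \<theta>" using K by blast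
  have Ff: "gfunctor G G F" and Kf: "gfunctor G G K" using F K by auto
  have "snd F \<in> iso (aut G z) (aut G (fst F z))"
  proof (rule isoI)
    show "snd F \<in> Group.hom (aut G z) (aut G (fst F z))"
      unfolding Group.hom_def using Ff z by (auto simp: hom_iff)
    show "bij_betw (snd F) (carrier (aut G z)) (carrier (aut G (fst F z)))"
      unfolding bij_betw_def
    proof
      show "inj_on (snd F) (carrier (aut G z))"
        by (rule inj_onI) (rule faithful[OF Kf Ff e], auto simp: hom_iff)
      show "snd F ` carrier (aut G z) = carrier (aut G (fst F z))"
      proof
        show "snd F ` carrier (aut G z) \<subseteq> carrier (aut G (fst F z))" using Ff z by (auto simp: hom_iff)
        show "carrier (aut G (fst F z)) \<subseteq> snd F ` carrier (aut G z)"
        proof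
          fix g assume g: "g \<in> carrier (aut G (fst F z))"
          have ga: "g \<in> Ar" "dm g = fst F z" "cd g = fst F z" using g by (auto simp: hom_iff)
          let ?e = "\<eta> z"
          have ea: "?e \<in> Ar" "dm ?e = fst K (fst F z)" "cd ?e = z" using e z Ff Kf by auto
          let ?f = "cmp ?e (cmp (snd K g) (ginv ?e))"
          have fa: "?f \<in> Ar" "dm ?f = z" "cd ?f = z" using ea ga Kf by auto
          have nat: "cmp ?e (snd K (snd F ?f)) = cmp ?f ?e"
            using nt_nat[OF e fa(1)] fa by simp
          have "snd K (snd F ?f) = cmp (ginv ?e) (cmp ?f ?e)"
            using nat[symmetric] ea fa Ff Kf by (metis ginv_l2 fa_ar cd_fa)
          also have "\<dots> = snd K g" using ea ga Kf by simp
          finally have "snd K (snd F ?f) = snd K g" .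
          hence "snd F ?f = g" by (rule faithful[OF Ff Kf t, rotated 4]) (use fa ga Ff in auto)
          moreover have "?f \<in> carrier (aut G z)" using fa by (simp add: hom_iff)
          ultimately show "g \<in> snd F ` carrier (aut G z)" by (metis image_eqI)
        qed
      qed
    qed
  qed
  thus ?thesis by (rule is_isoI)
qed

lemma se_homog: "self_equiv G F \<Longrightarrow> C \<in> homog_components G \<Longrightarrow> z \<in> C \<Longrightarrow> fst F z \<in> C"
proof -
  assume F: "self_equiv G F" and C: "C \<in> homog_components G" and z: "z \<in> C"
  have zo: "z \<in> Ob" using homog_sub[OF C] z by blast
  have "aut G (fst F z) \<cong> aut G z" using se_aut[OF F zo] aut_sym by blast
  hence "fst F z \<in> hcx z" using F zo unfolding hcx_def by simp
  thus ?thesis using homog_mem[OF C z] by simp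
qed

end


definition rf :: "('o, 'm) gpd \<Rightarrow> 'o set \<Rightarrow> ('o, 'm) sobj \<Rightarrow> ('o, 'm) sobj" where
  "rf G C F = (restrict (fst F) C, restrict (snd F) (gArr (full_sub G C)))"

locale hcl = gpdu G for G :: "('o, 'm) gpd" +
  fixes C :: "'o set"
  assumes C: "C \<in> homog_components G"
begin

abbreviation "H \<equiv> full_sub G C"
abbreviation "ArC \<equiv> gArr H"

lemma CO: "C \<subseteq> Ob" using homog_sub[OF C] .
lemma H_obj[simp]: "gObj H = C" by (simp add: full_sub_def)
lemma H_arr: "f \<in> ArC \<longleftrightarrow> f \<in> Ar \<and> dm f \<in> C \<and> cd f \<in> C" by (simp add: full_sub_def)
lemma H_arr_iff: "f \<in> ArC \<longleftrightarrow> f \<in> Ar \<and> dm f \<in> C" using H_arr homog_arr[OF C] by blast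
lemma H_dom[simp]: "gDom H = dm" by (simp add: full_sub_def)
lemma H_cod[simp]: "gCod H = cd" by (simp add: full_sub_def)
lemma H_comp[simp]: "gComp H = cmp" by (simp add: full_sub_def)
lemma H_id[simp]: "gId H = idt" by (simp add: full_sub_def)

lemma H_gpd: "groupoid H" using full_sub_groupoid[OF gpd CO] .
sublocale h: gpdu H by (rule gpdu.intro, rule gpdl.intro, rule H_gpd)

lemma rf_fst: "fst (rf G C F) = restrict (fst F) C" by (simp add: rf_def)
lemma rf_snd: "snd (rf G C F) = restrict (snd F) ArC" by (simp add: rf_def)

lemma rf_fun:
  assumes F: "gfunctor G G F" and m: "\<And>z. z \<in> C \<Longrightarrow> fst F z \<in> C"
  shows "gfunctor H H (rf G C F)"
  unfolding gfunctor_def rf_fst rf_snd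
proof (intro conjI ballI impI)
  fix f assume f: "f \<in> ArC"
  have fa: "f \<in> Ar" "dm f \<in> C" "cd f \<in> C" using f H_arr by auto
  show "restrict (snd F) ArC f \<in> hom H (restrict (fst F) C (gDom H f)) (restrict (fst F) C (gCod H f))"
    using fa F m f by (simp add: hom_def H_arr)
next
  fix f g assume f: "f \<in> ArC" and g: "g \<in> ArC" and e: "gCod H f = gDom H g"
  have fa: "f \<in> Ar" "dm f \<in> C" "cd f \<in> C" using f H_arr by auto
  have ga: "g \<in> Ar" "dm g \<in> C" "cd g \<in> C" using g H_arr by auto
  show "restrict (snd F) ArC (gComp H g f) = gComp H (restrict (snd F) ArC g) (restrict (snd F) ArC f)"
    using fa ga e F f g by (simp add: H_arr)
next
  fix a assume a: "a \<in> gObj H"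
  show "restrict (snd F) ArC (gId H a) = gId H (restrict (fst F) C a)"
    using a F CO by (auto simp: H_arr)
qed (use m in auto)

lemma rf_comp:
  assumes F: "gfunctor G G F" and K: "gfunctor G G K" and mK: "\<And>z. z \<in> C \<Longrightarrow> fst K z \<in> C"
  shows "rf G C (comp_functor G F K) = comp_functor H (rf G C F) (rf G C K)"
proof -
  have "restrict (fst (comp_functor G F K)) C = (\<lambda>a\<in>C. restrict (fst F) C (restrict (fst K) C a))"
    using mK CO by (auto intro!: restrict_ext)
  moreover have "restrict (snd (comp_functor G F K)) ArC = (\<lambda>f\<in>ArC. restrict (snd F) ArC (restrict (snd K) ArC f))"
    using mK CO K by (auto intro!: restrict_ext simp: H_arr)
  ultimately show ?thesis unfolding rf_def comp_functor_def[of H] by simp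
qed

lemma rf_id: "rf G C (id_functor G) = id_functor H"
  unfolding rf_def id_functor_def using CO by (auto intro!: restrict_ext simp: H_arr Int_absorb1[OF CO])

lemma rf_nt:
  assumes A: "gfunctor G G A" and B: "gfunctor G G B" and n: "nat_trans G G A B \<eta>"
    and mA: "\<And>z. z \<in> C \<Longrightarrow> fst A z \<in> C" and mB: "\<And>z. z \<in> C \<Longrightarrow> fst B z \<in> C"
  shows "nat_trans H H (rf G C A) (rf G C B) (restrict \<eta> C)"
  unfolding nat_trans_def rf_fst rf_snd
proof (intro conjI ballI)
  show "restrict \<eta> C \<in> extensional (gObj H)" by simp
  fix a assume a: "a \<in> gObj H"
  show "restrict \<eta> C a \<in> hom H (restrict (fst A) C a) (restrict (fst B) C a)"
    using a n mA mB CO by (auto simp: hom_def H_arr)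
next
  fix f assume f: "f \<in> ArC"
  have fa: "f \<in> Ar" "dm f \<in> C" "cd f \<in> C" using f H_arr by auto
  show "gComp H (restrict \<eta> C (gCod H f)) (restrict (snd A) ArC f) = gComp H (restrict (snd B) ArC f) (restrict \<eta> C (gDom H f))"
    using fa f nt_nat[OF n fa(1)] by simp
qed

lemma se_rf:
  assumes F: "self_equiv G F"
  shows "self_equiv H (rf G C F)"
proof -
  obtain K where K: "self_equiv G K" "\<exists>\<eta>. nat_trans G G (comp_functor G K F) (id_functor G) \<eta>"
     "\<exists>\<theta>. nat_trans G G (comp_functor G F K) (id_functor G) \<theta>" using se_qinv[OF F] by blast
  obtain \<eta> \<theta> where e: "nat_trans G G (comp_functor G K F) (id_functor G) \<eta>"
     and t: "nat_trans G G (comp_functor G F K) (id_functor G) \<theta>" using K by blast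
  have Ff: "gfunctor G G F" and Kf: "gfunctor G G K" using F K by auto
  have mF: "\<And>z. z \<in> C \<Longrightarrow> fst F z \<in> C" and mK: "\<And>z. z \<in> C \<Longrightarrow> fst K z \<in> C"
    using se_homog[OF F C] se_homog[OF K(1) C] by auto
  have mI: "\<And>z. z \<in> C \<Longrightarrow> fst (id_functor G) z \<in> C" using CO by auto
  have mKF: "\<And>z. z \<in> C \<Longrightarrow> fst (comp_functor G K F) z \<in> C" using mF mK CO by auto
  have mFK: "\<And>z. z \<in> C \<Longrightarrow> fst (comp_functor G F K) z \<in> C" using mF mK CO by auto
  have e': "nat_trans H H (comp_functor H (rf G C K) (rf G C F)) (id_functor H) (restrict \<eta> C)"
    using rf_nt[OF cf_fun[OF Kf Ff] idf_fun e mKF mI] rf_comp[OF Kf Ff mF] rf_id by simp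
  have t': "nat_trans H H (comp_functor H (rf G C F) (rf G C K)) (id_functor H) (restrict \<theta> C)"
    using rf_nt[OF cf_fun[OF Ff Kf] idf_fun t mFK mI] rf_comp[OF Ff Kf mK] rf_id by simp
  show ?thesis unfolding self_equiv_def
    using rf_fun[OF Ff mF] rf_fun[OF Kf mK] e' t' by blast
qed

end


context gpdu begin

abbreviation "I \<equiv> homog_components G"

definition gl :: "('o set \<Rightarrow> ('o, 'm) sobj) \<Rightarrow> ('o, 'm) sobj" where
  "gl \<Phi> = ((\<lambda>a\<in>Ob. fst (\<Phi> (hcx a)) a), (\<lambda>f\<in>Ar. snd (\<Phi> (hcx (dm f))) f))"

lemma gl_fst[simp]: "a \<in> Ob \<Longrightarrow> fst (gl \<Phi>) a = fst (\<Phi> (hcx a)) a" by (simp add: gl_def)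
lemma gl_snd[simp]: "f \<in> Ar \<Longrightarrow> snd (gl \<Phi>) f = snd (\<Phi> (hcx (dm f))) f" by (simp add: gl_def)

lemma hcl_of: "a \<in> Ob \<Longrightarrow> hcl G (hcx a)"
  by (rule hcl.intro, rule gpdu_axioms, unfold hcl_axioms_def, rule homog_of)

lemma arr_hc: assumes f: "f \<in> Ar" shows "hcx (cd f) = hcx (dm f)"
proof -
  have d: "dm f \<in> Ob" using f by (rule dm_ob)
  have C: "hcx (dm f) \<in> I" using homog_of[OF d] .
  have "dm f \<in> hcx (dm f)" using hcx_self[OF d] .
  hence "cd f \<in> hcx (dm f)" using homog_arr[OF C f] by blast
  thus ?thesis using homog_mem[OF C] by blast
qed

lemma arr_in: assumes f: "f \<in> Ar" shows "f \<in> gArr (full_sub G (hcx (dm f)))"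
proof -
  have d: "dm f \<in> Ob" using f by (rule dm_ob)
  have "dm f \<in> hcx (dm f)" using hcx_self[OF d] .
  thus ?thesis using hcl.H_arr_iff[OF hcl_of[OF d]] f by blast
qed

lemma sub_gpdl: "C \<in> I \<Longrightarrow> gpdl (full_sub G C)"
  using full_sub_groupoid[OF gpd homog_sub] gpdl.intro by blast

lemma gl_fun:
  assumes \<Phi>: "\<And>C. C \<in> I \<Longrightarrow> gfunctor (full_sub G C) (full_sub G C) (\<Phi> C)"
  shows "gfunctor G G (gl \<Phi>)"
  unfolding gfunctor_def
proof (intro conjI ballI impI)
  show "fst (gl \<Phi>) \<in> extensional Ob" "snd (gl \<Phi>) \<in> extensional Ar" by (simp_all add: gl_def)
next
  fix a assume a: "a \<in> Ob"
  interpret c: hcl G "hcx a" by (rule hcl_of[OF a])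
  have F: "gfunctor c.H c.H (\<Phi> (hcx a))" using \<Phi> c.C by blast
  show "fst (gl \<Phi>) a \<in> Ob" using c.h.fo_ob[OF F, of a] hcx_self[OF a] a c.CO by auto
  show "snd (gl \<Phi>) (idt a) = idt (fst (gl \<Phi>) a)"
    using c.h.f_id[OF F, of a] hcx_self[OF a] a by simp
next
  fix f assume f: "f \<in> Ar"
  interpret c: hcl G "hcx (dm f)" by (rule hcl_of, simp add: f)
  have F: "gfunctor c.H c.H (\<Phi> (hcx (dm f)))" using \<Phi> c.C by blast
  have fi: "f \<in> c.ArC" using arr_in[OF f] .
  have "snd (\<Phi> (hcx (dm f))) f \<in> c.ArC" using c.h.fa_ar[OF F fi] .
  thus "snd (gl \<Phi>) f \<in> hom G (fst (gl \<Phi>) (dm f)) (fst (gl \<Phi>) (cd f))"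
    using c.h.dm_fa[OF F fi] c.h.cd_fa[OF F fi] f arr_hc[OF f] by (simp add: hom_iff c.H_arr)
next
  fix f g assume f: "f \<in> Ar" and g: "g \<in> Ar" and e: "cd f = dm g"
  interpret c: hcl G "hcx (dm f)" by (rule hcl_of, simp add: f)
  have F: "gfunctor c.H c.H (\<Phi> (hcx (dm f)))" using \<Phi> c.C by blast
  have fi: "f \<in> c.ArC" using arr_in[OF f] .
  have hg: "hcx (dm g) = hcx (dm f)" using arr_hc[OF f] e by simp
  have gi: "g \<in> c.ArC" using arr_in[OF g] hg by simp
  show "snd (gl \<Phi>) (cmp g f) = cmp (snd (gl \<Phi>) g) (snd (gl \<Phi>) f)"
    using c.h.f_cmp[OF F fi gi] e f g hg by simp
qed

lemma gl_cong: "(\<And>C. C \<in> I \<Longrightarrow> \<Phi> C = \<Psi> C) \<Longrightarrow> gl \<Phi> = gl \<Psi>"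
  unfolding gl_def using homog_of by (auto intro!: restrict_ext)

lemma gl_comp:
  assumes \<Phi>: "\<And>C. C \<in> I \<Longrightarrow> gfunctor (full_sub G C) (full_sub G C) (\<Phi> C)"
    and \<Psi>: "\<And>C. C \<in> I \<Longrightarrow> gfunctor (full_sub G C) (full_sub G C) (\<Psi> C)"
  shows "comp_functor G (gl \<Phi>) (gl \<Psi>) = gl (\<lambda>C. comp_functor (full_sub G C) (\<Phi> C) (\<Psi> C))"
proof (rule functor_eqI)
  show "gfunctor G G (comp_functor G (gl \<Phi>) (gl \<Psi>))" using gl_fun[OF \<Phi>] gl_fun[OF \<Psi>] by simp
  show "gfunctor G G (gl (\<lambda>C. comp_functor (full_sub G C) (\<Phi> C) (\<Psi> C)))"
    by (rule gl_fun, rule gpdl.cf_fun[OF sub_gpdl]) (auto intro: \<Phi> \<Psi>)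
next
  fix a assume a: "a \<in> Ob"
  interpret c: hcl G "hcx a" by (rule hcl_of[OF a])
  have F: "gfunctor c.H c.H (\<Phi> (hcx a))" "gfunctor c.H c.H (\<Psi> (hcx a))" using \<Phi> \<Psi> c.C by blast+
  have ai: "a \<in> hcx a" using hcx_self[OF a] .
  have b: "fst (\<Psi> (hcx a)) a \<in> hcx a" using c.h.fo_ob[OF F(2), of a] ai by simp
  hence bo: "fst (\<Psi> (hcx a)) a \<in> Ob" using c.CO by blast
  have hb: "hcx (fst (\<Psi> (hcx a)) a) = hcx a" using homog_mem[OF c.C b] .
  show "fst (comp_functor G (gl \<Phi>) (gl \<Psi>)) a = fst (gl (\<lambda>C. comp_functor (full_sub G C) (\<Phi> C) (\<Psi> C))) a"
    using a bo hb ai by (simp add: c.h.cf_fst[simplified])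
next
  fix f assume f: "f \<in> Ar"
  interpret c: hcl G "hcx (dm f)" by (rule hcl_of, simp add: f)
  have F: "gfunctor c.H c.H (\<Phi> (hcx (dm f)))" "gfunctor c.H c.H (\<Psi> (hcx (dm f)))" using \<Phi> \<Psi> c.C by blast+
  have fi: "f \<in> c.ArC" using arr_in[OF f] .
  have g: "snd (\<Psi> (hcx (dm f))) f \<in> c.ArC" using c.h.fa_ar[OF F(2) fi] .
  have gd: "dm (snd (\<Psi> (hcx (dm f))) f) \<in> hcx (dm f)" using g c.H_arr by blast
  have ga: "snd (\<Psi> (hcx (dm f))) f \<in> Ar" using g c.H_arr by blast
  have hb: "hcx (dm (snd (\<Psi> (hcx (dm f))) f)) = hcx (dm f)" using homog_mem[OF c.C gd] .
  show "snd (comp_functor G (gl \<Phi>) (gl \<Psi>)) f = snd (gl (\<lambda>C. comp_functor (full_sub G C) (\<Phi> C) (\<Psi> C))) f"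
    using f ga hb fi by (simp add: c.h.cf_snd[simplified])
qed

lemma gl_id: "gl (\<lambda>C. id_functor (full_sub G C)) = id_functor G"
proof (rule functor_eqI)
  show "gfunctor G G (gl (\<lambda>C. id_functor (full_sub G C)))"
    by (rule gl_fun, rule gpdl.idf_fun[OF sub_gpdl])
next
  fix a assume a: "a \<in> Ob"
  interpret c: hcl G "hcx a" by (rule hcl_of[OF a])
  show "fst (gl (\<lambda>C. id_functor (full_sub G C))) a = fst (id_functor G) a"
    using a hcx_self[OF a] by (simp add: id_functor_def full_sub_def)
next
  fix f assume f: "f \<in> Ar"
  show "snd (gl (\<lambda>C. id_functor (full_sub G C))) f = snd (id_functor G) f"
    using f arr_in[OF f] by (simp add: id_functor_def)
qed simp

lemma gl_nt:
  assumes \<Phi>: "\<And>C. C \<in> I \<Longrightarrow> gfunctor (full_sub G C) (full_sub G C) (\<Phi> C)"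
    and \<Psi>: "\<And>C. C \<in> I \<Longrightarrow> gfunctor (full_sub G C) (full_sub G C) (\<Psi> C)"
    and n: "\<And>C. C \<in> I \<Longrightarrow> nat_trans (full_sub G C) (full_sub G C) (\<Phi> C) (\<Psi> C) (\<eta> C)"
  shows "nat_trans G G (gl \<Phi>) (gl \<Psi>) (\<lambda>a\<in>Ob. \<eta> (hcx a) a)"
proof (rule nat_transI)
  fix a assume a: "a \<in> Ob"
  interpret c: hcl G "hcx a" by (rule hcl_of[OF a])
  have N: "nat_trans c.H c.H (\<Phi> (hcx a)) (\<Psi> (hcx a)) (\<eta> (hcx a))" using n c.C by blast
  have ai: "a \<in> gObj c.H" using hcx_self[OF a] by simp
  show "(\<lambda>a\<in>Ob. \<eta> (hcx a) a) a \<in> Ar" "dm ((\<lambda>a\<in>Ob. \<eta> (hcx a) a) a) = fst (gl \<Phi>) a"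
       "cd ((\<lambda>a\<in>Ob. \<eta> (hcx a) a) a) = fst (gl \<Psi>) a"
    using c.h.nt_ar[OF N ai] c.h.dm_nt[OF N ai] c.h.cd_nt[OF N ai] a by (simp_all add: c.H_arr)
next
  fix f assume f: "f \<in> Ar"
  interpret c: hcl G "hcx (dm f)" by (rule hcl_of, simp add: f)
  have N: "nat_trans c.H c.H (\<Phi> (hcx (dm f))) (\<Psi> (hcx (dm f))) (\<eta> (hcx (dm f)))" using n c.C by blast
  have fi: "f \<in> c.ArC" using arr_in[OF f] .
  show "cmp ((\<lambda>a\<in>Ob. \<eta> (hcx a) a) (cd f)) (snd (gl \<Phi>) f) = cmp (snd (gl \<Psi>) f) ((\<lambda>a\<in>Ob. \<eta> (hcx a) a) (dm f))"
    using c.h.nt_nat[OF N fi] f arr_hc[OF f] by simp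
qed simp

end


context hcl begin

lemma ro_C: "F \<in> gObj S \<Longrightarrow> restr_o G F C = rf G C F"
  unfolding restr_o_def rf_def using C by simp

lemma rm_C: "u \<in> gArr S \<Longrightarrow> restr_m G u C = ((rf G C (fst (fst u)), rf G C (snd (fst u))), restrict (snd u) C)"
  unfolding restr_m_def rf_def using C by simp

lemma mC: "self_equiv G F \<Longrightarrow> z \<in> C \<Longrightarrow> fst F z \<in> C" using se_homog[OF _ C] by blast

lemma rm_arr: assumes u: "u \<in> gArr S" shows "restr_m G u C \<in> gArr h.S"
proof -
  from u obtain F F' \<eta> where fe: "u = ((F, F'), \<eta>)" "self_equiv G F" "self_equiv G F'" "nat_trans G G F F' \<eta>" by (rule S_arrE)
  show ?thesis unfolding rm_C[OF u] using fe se_rf rf_nt[OF se_fun se_fun _ mC mC]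
    by (simp add: h.S_arr)
qed

lemma rf_arr_H: "gfunctor G G F \<Longrightarrow> (\<And>z. z \<in> C \<Longrightarrow> fst F z \<in> C) \<Longrightarrow> f \<in> ArC \<Longrightarrow> snd F f \<in> ArC"
  by (simp add: H_arr)

lemma rm_tm:
  assumes u: "u \<in> gArr S" and v: "v \<in> gArr S"
  shows "restr_m G (tens_m S u v) C = tens_m h.S (restr_m G u C) (restr_m G v C)"
proof -
  from u obtain F F' \<eta> where fe: "u = ((F, F'), \<eta>)" "self_equiv G F" "self_equiv G F'" "nat_trans G G F F' \<eta>" by (rule S_arrE)
  from v obtain K K' \<theta> where ge: "v = ((K, K'), \<theta>)" "self_equiv G K" "self_equiv G K'" "nat_trans G G K K' \<theta>" by (rule S_arrE)
  have tm: "tens_m S u v \<in> gArr S" using S_tm_hom[OF u v] by (simp add: hom_def)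
  have fu: "gfunctor G G F" "gfunctor G G F'" "gfunctor G G K" "gfunctor G G K'" using fe ge by auto
  have e1: "rf G C (comp_functor G F K) = comp_functor H (rf G C F) (rf G C K)" by (rule rf_comp[OF fu(1) fu(3) mC[OF ge(2)]])
  have e2: "rf G C (comp_functor G F' K') = comp_functor H (rf G C F') (rf G C K')" by (rule rf_comp[OF fu(2) fu(4) mC[OF ge(3)]])
  have e3: "restrict (\<lambda>a\<in>Ob. cmp (\<eta> (fst K' a)) (snd F (\<theta> a))) C =
     (\<lambda>a\<in>C. cmp (restrict \<eta> C (fst (rf G C K') a)) (snd (rf G C F) (restrict \<theta> C a)))"
  proof (rule restrict_ext)
    fix a assume a: "a \<in> C"
    have ao: "a \<in> Ob" using a CO by blast
    have K'a: "fst K' a \<in> C" using mC[OF ge(3) a] .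
    have ta: "\<theta> a \<in> ArC" using ge(4) ao a K'a mC[OF ge(2) a] by (simp add: H_arr)
    show "(\<lambda>a\<in>Ob. cmp (\<eta> (fst K' a)) (snd F (\<theta> a))) a = cmp (restrict \<eta> C (fst (rf G C K') a)) (snd (rf G C F) (restrict \<theta> C a))"
      using ao a K'a ta by (simp add: rf_fst rf_snd)
  qed
  show ?thesis unfolding rm_C[OF tm] rm_C[OF u] rm_C[OF v] using fe ge e1 e2 e3 by simp
qed

lemma rm_comp:
  assumes u: "u \<in> gArr S" and v: "v \<in> gArr S" and e: "gCod S u = gDom S v"
  shows "restr_m G (gComp S v u) C = gComp h.S (restr_m G v C) (restr_m G u C)"
proof -
  have c: "gComp S v u \<in> gArr S" using S_groupoid u v e unfolding groupoid_def hom_def by blast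
  show ?thesis unfolding rm_C[OF c] rm_C[OF u] rm_C[OF v] using CO by (auto intro!: restrict_ext simp: Int_absorb1[OF CO])
qed

lemma rm_id:
  assumes F: "F \<in> gObj S"
  shows "restr_m G (gId S F) C = gId h.S (restr_o G F C)"
proof -
  have c: "gId S F \<in> gArr S" using S_groupoid F unfolding groupoid_def hom_def by blast
  show ?thesis unfolding rm_C[OF c] ro_C[OF F] using CO by (auto intro!: restrict_ext simp: rf_fst Int_absorb1[OF CO])
qed

lemma rm_as:
  assumes a: "self_equiv G A" and b: "self_equiv G B" and d: "self_equiv G D"
  shows "restr_m G (assoc_m S A B D) C = assoc_m h.S (rf G C A) (rf G C B) (rf G C D)"
proof -
  have x: "assoc_m S A B D \<in> gArr S" by (rule mgl.as_ar[OF mgl.intro[OF S_monoidal]]) (simp_all add: a b d)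
  have fu: "gfunctor G G A" "gfunctor G G B" "gfunctor G G D" using a b d by auto
  show ?thesis unfolding rm_C[OF x]
    using rf_comp[OF cf_fun[OF fu(1) fu(2)] fu(3) mC[OF d]] rf_comp[OF fu(1) fu(2) mC[OF b]]
      rf_comp[OF fu(1) cf_fun[OF fu(2) fu(3)] mC[OF se_comp[OF b d]]] rf_comp[OF fu(2) fu(3) mC[OF d]] mC[OF b] mC[OF d] CO a b d
    by (auto intro!: restrict_ext simp: rf_fst Int_absorb1[OF CO])
qed

lemma rm_lu:
  assumes a: "self_equiv G A"
  shows "restr_m G (lunit_m S A) C = lunit_m h.S (rf G C A)"
proof -
  have x: "lunit_m S A \<in> gArr S" by (rule mgl.lu_ar[OF mgl.intro[OF S_monoidal]]) (simp add: a)
  have fu: "gfunctor G G A" using a by auto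
  show ?thesis unfolding rm_C[OF x]
    using rf_comp[OF idf_fun fu mC[OF a]] rf_id CO a by (auto intro!: restrict_ext simp: rf_fst Int_absorb1[OF CO])
qed

lemma rm_ru:
  assumes a: "self_equiv G A"
  shows "restr_m G (runit_m S A) C = runit_m h.S (rf G C A)"
proof -
  have x: "runit_m S A \<in> gArr S" by (rule mgl.ru_ar[OF mgl.intro[OF S_monoidal]]) (simp add: a)
  have fu: "gfunctor G G A" using a by auto
  have mI: "\<And>z. z \<in> C \<Longrightarrow> fst (id_functor G) z \<in> C" using CO by auto
  show ?thesis unfolding rm_C[OF x]
    using rf_comp[OF fu idf_fun mI] rf_id CO a by (auto intro!: restrict_ext simp: rf_fst Int_absorb1[OF CO])
qed

end


context gpdu begin

lemma hcl_C: "C \<in> I \<Longrightarrow> hcl G C" by (rule hcl.intro, rule gpdu_axioms, unfold hcl_axioms_def)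

lemma gl_se:
  assumes \<Phi>: "\<And>C. C \<in> I \<Longrightarrow> self_equiv (full_sub G C) (\<Phi> C)"
  shows "self_equiv G (gl \<Phi>)"
proof -
  define P where "P C K \<longleftrightarrow> self_equiv (full_sub G C) K \<and>
     (\<exists>\<eta>. nat_trans (full_sub G C) (full_sub G C) (comp_functor (full_sub G C) K (\<Phi> C)) (id_functor (full_sub G C)) \<eta>) \<and>
     (\<exists>\<theta>. nat_trans (full_sub G C) (full_sub G C) (comp_functor (full_sub G C) (\<Phi> C) K) (id_functor (full_sub G C)) \<theta>)" for C K
  define K where "K C = (SOME K. P C K)" for C
  have KP: "P C (K C)" if C: "C \<in> I" for C
  proof -
    have "\<exists>K. P C K" unfolding P_def using gpdl.se_qinv[OF sub_gpdl[OF C] \<Phi>[OF C]] .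
    from someI_ex[OF this] show ?thesis unfolding K_def .
  qed
  define e where "e C = (SOME \<eta>. nat_trans (full_sub G C) (full_sub G C) (comp_functor (full_sub G C) (K C) (\<Phi> C)) (id_functor (full_sub G C)) \<eta>)" for C
  define t where "t C = (SOME \<theta>. nat_trans (full_sub G C) (full_sub G C) (comp_functor (full_sub G C) (\<Phi> C) (K C)) (id_functor (full_sub G C)) \<theta>)" for C
  have eP: "nat_trans (full_sub G C) (full_sub G C) (comp_functor (full_sub G C) (K C) (\<Phi> C)) (id_functor (full_sub G C)) (e C)"
    if C: "C \<in> I" for C
  proof -
    have "\<exists>\<eta>. nat_trans (full_sub G C) (full_sub G C) (comp_functor (full_sub G C) (K C) (\<Phi> C)) (id_functor (full_sub G C)) \<eta>"
      using KP[OF C] unfolding P_def by blast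
    from someI_ex[OF this] show ?thesis unfolding e_def .
  qed
  have tP: "nat_trans (full_sub G C) (full_sub G C) (comp_functor (full_sub G C) (\<Phi> C) (K C)) (id_functor (full_sub G C)) (t C)"
    if C: "C \<in> I" for C
  proof -
    have "\<exists>\<theta>. nat_trans (full_sub G C) (full_sub G C) (comp_functor (full_sub G C) (\<Phi> C) (K C)) (id_functor (full_sub G C)) \<theta>"
      using KP[OF C] unfolding P_def by blast
    from someI_ex[OF this] show ?thesis unfolding t_def .
  qed
  have fP: "gfunctor (full_sub G C) (full_sub G C) (\<Phi> C)" if "C \<in> I" for C using \<Phi>[OF that] self_equiv_def by blast
  have fK: "gfunctor (full_sub G C) (full_sub G C) (K C)" if "C \<in> I" for C using KP[OF that] self_equiv_def P_def by blast
  have fKP: "gfunctor (full_sub G C) (full_sub G C) (comp_functor (full_sub G C) (K C) (\<Phi> C))" if "C \<in> I" for C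
    using gpdl.cf_fun[OF sub_gpdl[OF that] fK[OF that] fP[OF that]] .
  have fPK: "gfunctor (full_sub G C) (full_sub G C) (comp_functor (full_sub G C) (\<Phi> C) (K C))" if "C \<in> I" for C
    using gpdl.cf_fun[OF sub_gpdl[OF that] fP[OF that] fK[OF that]] .
  have fI: "gfunctor (full_sub G C) (full_sub G C) (id_functor (full_sub G C))" if "C \<in> I" for C
    using gpdl.idf_fun[OF sub_gpdl[OF that]] .
  note n1 = gl_nt[OF fKP fI eP]
  note n2 = gl_nt[OF fPK fI tP]
  show ?thesis unfolding self_equiv_def
  proof (intro conjI exI)
    show "gfunctor G G (gl \<Phi>)" by (rule gl_fun[OF fP])
    show "gfunctor G G (gl K)" by (rule gl_fun[OF fK])
    show "nat_trans G G (comp_functor G (gl K) (gl \<Phi>)) (id_functor G) (\<lambda>a\<in>Ob. e (hcx a) a)"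
      using n1 gl_comp[OF fK fP] gl_id by simp
    show "nat_trans G G (comp_functor G (gl \<Phi>) (gl K)) (id_functor G) (\<lambda>a\<in>Ob. t (hcx a) a)"
      using n2 gl_comp[OF fP fK] gl_id by simp
  qed
qed

lemma rf_gl:
  assumes C: "C \<in> I" and \<Phi>: "\<And>C. C \<in> I \<Longrightarrow> gfunctor (full_sub G C) (full_sub G C) (\<Phi> C)"
  shows "rf G C (gl \<Phi>) = \<Phi> C"
proof -
  interpret c: hcl G C by (rule hcl_C[OF C])
  have F: "gfunctor c.H c.H (\<Phi> C)" using \<Phi>[OF C] .
  have "restrict (fst (gl \<Phi>)) C = fst (\<Phi> C)"
  proof (rule extensionalityI[of _ C])
    show "fst (\<Phi> C) \<in> extensional C" using c.h.fo_ext[OF F] by simp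
    fix a assume a: "a \<in> C"
    have ao: "a \<in> Ob" using a c.CO by blast
    show "restrict (fst (gl \<Phi>)) C a = fst (\<Phi> C) a" using a ao homog_mem[OF C a] by simp
  qed simp
  moreover have "restrict (snd (gl \<Phi>)) c.ArC = snd (\<Phi> C)"
  proof (rule extensionalityI[of _ c.ArC])
    show "snd (\<Phi> C) \<in> extensional c.ArC" using c.h.fa_ext[OF F] .
    fix f assume f: "f \<in> c.ArC"
    have fa: "f \<in> Ar" "dm f \<in> C" using f c.H_arr by auto
    show "restrict (snd (gl \<Phi>)) c.ArC f = snd (\<Phi> C) f" using f fa homog_mem[OF C fa(2)] by simp
  qed simp
  ultimately show ?thesis by (simp add: rf_def prod_eq_iff)
qed

lemma gl_rf:
  assumes F: "gfunctor G G F"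
  shows "gl (\<lambda>C. rf G C F) = F"
proof -
  have "fst (gl (\<lambda>C. rf G C F)) = fst F"
  proof (rule extensionalityI[of _ Ob])
    show "fst (gl (\<lambda>C. rf G C F)) \<in> extensional Ob" by (simp add: gl_def)
    show "fst F \<in> extensional Ob" by (rule fo_ext[OF F])
    fix a assume a: "a \<in> Ob"
    show "fst (gl (\<lambda>C. rf G C F)) a = fst F a" using a hcx_self[OF a] by (simp add: rf_def)
  qed
  moreover have "snd (gl (\<lambda>C. rf G C F)) = snd F"
  proof (rule extensionalityI[of _ Ar])
    show "snd (gl (\<lambda>C. rf G C F)) \<in> extensional Ar" by (simp add: gl_def)
    show "snd F \<in> extensional Ar" by (rule fa_ext[OF F])
    fix f assume f: "f \<in> Ar"
    show "snd (gl (\<lambda>C. rf G C F)) f = snd F f" using f arr_in[OF f] by (simp add: rf_def)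
  qed
  ultimately show ?thesis by (simp add: prod_eq_iff)
qed

definition glm :: "('o set \<Rightarrow> ('o, 'm) smor) \<Rightarrow> ('o, 'm) smor" where
  "glm w = ((gl (\<lambda>C. fst (fst (w C))), gl (\<lambda>C. snd (fst (w C)))), (\<lambda>a\<in>Ob. snd (w (hcx a)) a))"

lemma glm_arr:
  assumes w: "\<And>C. C \<in> I \<Longrightarrow> w C \<in> gArr (Sym (full_sub G C))"
  shows "glm w \<in> gArr S"
proof -
  have W: "self_equiv (full_sub G C) (fst (fst (w C))) \<and> self_equiv (full_sub G C) (snd (fst (w C))) \<and>
     nat_trans (full_sub G C) (full_sub G C) (fst (fst (w C))) (snd (fst (w C))) (snd (w C))" if C: "C \<in> I" for C
    using w[OF C] gpdu.S_arr[OF gpdu.intro[OF sub_gpdl[OF C]]] by blast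
  have s1: "self_equiv G (gl (\<lambda>C. fst (fst (w C))))" by (rule gl_se) (use W in blast)
  have s2: "self_equiv G (gl (\<lambda>C. snd (fst (w C))))" by (rule gl_se) (use W in blast)
  have n: "nat_trans G G (gl (\<lambda>C. fst (fst (w C)))) (gl (\<lambda>C. snd (fst (w C)))) (\<lambda>a\<in>Ob. snd (w (hcx a)) a)"
  proof (rule gl_nt)
    fix C assume C: "C \<in> I"
    show "gfunctor (full_sub G C) (full_sub G C) (fst (fst (w C)))" using W[OF C] unfolding self_equiv_def by (elim conjE)
    show "gfunctor (full_sub G C) (full_sub G C) (snd (fst (w C)))" using W[OF C] unfolding self_equiv_def by (elim conjE)
    show "nat_trans (full_sub G C) (full_sub G C) (fst (fst (w C))) (snd (fst (w C))) (snd (w C))" using W[OF C] by (elim conjE)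
  qed
  show ?thesis unfolding glm_def using s1 s2 n by (simp add: S_arr)
qed

end


context gpdu begin

lemma sub_tg: "C \<in> I \<Longrightarrow> two_group (Sym (full_sub G C))"
  by (rule gpdu.S_two_group[OF gpdu.intro[OF sub_gpdl]])

sublocale pr: prodl I "\<lambda>C. Sym (full_sub G C)" by (rule prodl.intro, rule sub_tg)

lemma ro_eq: "F \<in> gObj S \<Longrightarrow> restr_o G F = (\<lambda>C\<in>I. rf G C F)"
  unfolding restr_o_def rf_def by simp

lemma ro_ob: assumes F: "F \<in> gObj S" shows "restr_o G F \<in> gObj pr.P"
proof -
  have "rf G C F \<in> gObj (Sym (full_sub G C))" if C: "C \<in> I" for C
  proof -
    interpret c: hcl G C by (rule hcl_C[OF C])
    show ?thesis using c.se_rf F by simp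
  qed
  thus ?thesis unfolding ro_eq[OF F] by auto
qed

lemma rm_ar: assumes u: "u \<in> gArr S" shows "restr_m G u \<in> gArr pr.P"
proof -
  have "restr_m G u C \<in> gArr (Sym (full_sub G C))" if C: "C \<in> I" for C
  proof -
    interpret c: hcl G C by (rule hcl_C[OF C])
    show ?thesis using c.rm_arr[OF u] .
  qed
  moreover have "restr_m G u \<in> extensional I" unfolding restr_m_def using u by simp
  ultimately show ?thesis by (auto simp: PiE_iff)
qed

lemma S_ar_dom: "u \<in> gArr S \<Longrightarrow> fst (fst u) \<in> gObj S" by (simp add: S_arr)
lemma S_ar_cod: "u \<in> gArr S \<Longrightarrow> snd (fst u) \<in> gObj S" by (simp add: S_arr)

lemma rm_ext: "u \<in> gArr S \<Longrightarrow> restr_m G u \<in> extensional I"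
  using rm_ar by (auto simp: PiE_iff)

lemma restr_strict: "strict_mf S pr.P (restr_o G, restr_m G)"
proof -
  interpret sm: mgl S by (rule mgl.intro[OF S_monoidal])
  show ?thesis
  unfolding strict_mf_def fst_conv snd_conv
proof (intro conjI ballI)
  show "gfunctor S pr.P (restr_o G, restr_m G)"
    unfolding gfunctor_def fst_conv snd_conv
  proof (intro conjI ballI impI)
    show "restr_o G \<in> extensional (gObj S)" unfolding restr_o_def by simp
    show "restr_m G \<in> extensional (gArr S)" unfolding restr_m_def by simp
    fix a assume "a \<in> gObj S" thus "restr_o G a \<in> gObj pr.P" by (rule ro_ob)
  next
    fix u assume u: "u \<in> gArr S"
    have d: "gDom pr.P (restr_m G u) = restr_o G (gDom S u)"
    proof -
      have "gDom (Sym (full_sub G C)) (restr_m G u C) = rf G C (fst (fst u))" if C: "C \<in> I" for C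
      proof -
        interpret c: hcl G C by (rule hcl_C[OF C])
        show ?thesis unfolding c.rm_C[OF u] by simp
      qed
      thus ?thesis using ro_eq[OF S_ar_dom[OF u]] by (auto intro!: restrict_ext)
    qed
    have c: "gCod pr.P (restr_m G u) = restr_o G (gCod S u)"
    proof -
      have "gCod (Sym (full_sub G C)) (restr_m G u C) = rf G C (snd (fst u))" if C: "C \<in> I" for C
      proof -
        interpret c: hcl G C by (rule hcl_C[OF C])
        show ?thesis unfolding c.rm_C[OF u] by simp
      qed
      thus ?thesis using ro_eq[OF S_ar_cod[OF u]] by (auto intro!: restrict_ext)
    qed
    show "restr_m G u \<in> hom pr.P (restr_o G (gDom S u)) (restr_o G (gCod S u))"
      using rm_ar[OF u] d c by (simp add: hom_def)
  next
    fix u v assume u: "u \<in> gArr S" and v: "v \<in> gArr S" and e: "gCod S u = gDom S v"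
    have "restr_m G (gComp S v u) C = gComp (Sym (full_sub G C)) (restr_m G v C) (restr_m G u C)" if C: "C \<in> I" for C
    proof -
      interpret c: hcl G C by (rule hcl_C[OF C])
      show ?thesis using c.rm_comp[OF u v e] .
    qed
    moreover have "restr_m G (gComp S v u) \<in> extensional I" by (rule rm_ext) (rule sm.cmp_ar[OF u v e])
    ultimately show "restr_m G (gComp S v u) = gComp pr.P (restr_m G v) (restr_m G u)"
      by (auto intro!: extensionalityI[of _ I])
  next
    fix a assume a: "a \<in> gObj S"
    have "restr_m G (gId S a) C = gId (Sym (full_sub G C)) (restr_o G a C)" if C: "C \<in> I" for C
    proof -
      interpret c: hcl G C by (rule hcl_C[OF C])
      show ?thesis using c.rm_id[OF a] .
    qed
    moreover have "restr_m G (gId S a) \<in> extensional I" by (rule rm_ext) (rule sm.id_ar[OF a])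
    ultimately show "restr_m G (gId S a) = gId pr.P (restr_o G a)"
      by (auto intro!: extensionalityI[of _ I])
  qed
next
  fix a b assume a: "a \<in> gObj S" and b: "b \<in> gObj S"
  have ab: "tens_o S a b \<in> gObj S" using a b by simp
  have "rf G C (tens_o S a b) = tens_o (Sym (full_sub G C)) (rf G C a) (rf G C b)" if C: "C \<in> I" for C
  proof -
    interpret c: hcl G C by (rule hcl_C[OF C])
    show ?thesis using c.rf_comp[OF se_fun se_fun c.mC] a b by simp
  qed
  thus "restr_o G (tens_o S a b) = tens_o pr.P (restr_o G a) (restr_o G b)"
    unfolding ro_eq[OF ab] ro_eq[OF a] ro_eq[OF b] by (auto intro!: restrict_ext)
next
  fix u v assume u: "u \<in> gArr S" and v: "v \<in> gArr S"
  have "restr_m G (tens_m S u v) C = tens_m (Sym (full_sub G C)) (restr_m G u C) (restr_m G v C)" if C: "C \<in> I" for C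
  proof -
    interpret c: hcl G C by (rule hcl_C[OF C])
    show ?thesis using c.rm_tm[OF u v] .
  qed
  moreover have "restr_m G (tens_m S u v) \<in> extensional I" by (rule rm_ext) (rule sm.tm_ar[OF u v])
  ultimately show "restr_m G (tens_m S u v) = tens_m pr.P (restr_m G u) (restr_m G v)"
    by (auto intro!: extensionalityI[of _ I])
next
  have "rf G C (id_functor G) = unit_o (Sym (full_sub G C))" if C: "C \<in> I" for C
  proof -
    interpret c: hcl G C by (rule hcl_C[OF C])
    show ?thesis using c.rf_id by simp
  qed
  thus "restr_o G (unit_o S) = unit_o pr.P"
    using ro_eq[of "id_functor G"] by (auto intro!: restrict_ext)
next
  fix a b d assume a: "a \<in> gObj S" and b: "b \<in> gObj S" and d: "d \<in> gObj S"
  have "restr_m G (assoc_m S a b d) C = assoc_m (Sym (full_sub G C)) (restr_o G a C) (restr_o G b C) (restr_o G d C)" if C: "C \<in> I" for C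
  proof -
    interpret c: hcl G C by (rule hcl_C[OF C])
    show ?thesis using c.rm_as a b d c.ro_C a b d by simp
  qed
  moreover have "restr_m G (assoc_m S a b d) \<in> extensional I" by (rule rm_ext) (rule sm.as_ar[OF a b d])
  ultimately show "restr_m G (assoc_m S a b d) = assoc_m pr.P (restr_o G a) (restr_o G b) (restr_o G d)"
    by (auto intro!: extensionalityI[of _ I])
next
  fix a assume a: "a \<in> gObj S"
  have "restr_m G (lunit_m S a) C = lunit_m (Sym (full_sub G C)) (restr_o G a C)" if C: "C \<in> I" for C
  proof -
    interpret c: hcl G C by (rule hcl_C[OF C])
    show ?thesis using c.rm_lu a c.ro_C a by simp
  qed
  moreover have "restr_m G (lunit_m S a) \<in> extensional I" by (rule rm_ext) (rule sm.lu_ar[OF a])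
  ultimately show "restr_m G (lunit_m S a) = lunit_m pr.P (restr_o G a)"
    by (auto intro!: extensionalityI[of _ I])
  have "restr_m G (runit_m S a) C = runit_m (Sym (full_sub G C)) (restr_o G a C)" if C: "C \<in> I" for C
  proof -
    interpret c: hcl G C by (rule hcl_C[OF C])
    show ?thesis using c.rm_ru a c.ro_C a by simp
  qed
  moreover have "restr_m G (runit_m S a) \<in> extensional I" by (rule rm_ext) (rule sm.ru_ar[OF a])
  ultimately show "restr_m G (runit_m S a) = runit_m pr.P (restr_o G a)"
    by (auto intro!: extensionalityI[of _ I])
qed
qed

end


context gpdu begin

lemma subS_obj: "C \<in> I \<Longrightarrow> F \<in> gObj (Sym (full_sub G C)) \<longleftrightarrow> self_equiv (full_sub G C) F"
  by (rule gpdu.S_obj[OF gpdu.intro[OF sub_gpdl]])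

lemma wP: assumes w: "w \<in> gArr pr.P" and C: "C \<in> I"
  shows "self_equiv (full_sub G C) (fst (fst (w C))) \<and> self_equiv (full_sub G C) (snd (fst (w C))) \<and>
    nat_trans (full_sub G C) (full_sub G C) (fst (fst (w C))) (snd (fst (w C))) (snd (w C))"
proof -
  have "w C \<in> gArr (Sym (full_sub G C))" using w C by (auto simp: PiE_iff)
  thus ?thesis by (simp only: gpdu.S_arr[OF gpdu.intro[OF sub_gpdl[OF C]]])
qed

lemma Ko: assumes \<Phi>: "\<Phi> \<in> gObj pr.P" shows "gl \<Phi> \<in> gObj S"
  using gl_se[of \<Phi>] \<Phi> subS_obj by (auto simp: PiE_iff)

lemma Ka: assumes w: "w \<in> gArr pr.P" shows "glm w \<in> gArr S"
  by (rule glm_arr) (use w in \<open>auto simp: PiE_iff\<close>)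

lemma r1: assumes a: "a \<in> gObj S" shows "gl (restr_o G a) = a"
proof -
  have "gl (restr_o G a) = gl (\<lambda>C. rf G C a)" unfolding ro_eq[OF a] by (rule gl_cong) simp
  also have "\<dots> = a" using gl_rf a by simp
  finally show ?thesis .
qed

lemma r3: assumes \<Phi>: "\<Phi> \<in> gObj pr.P" shows "restr_o G (gl \<Phi>) = \<Phi>"
proof -
  have f: "\<And>C. C \<in> I \<Longrightarrow> gfunctor (full_sub G C) (full_sub G C) (\<Phi> C)"
  proof -
    fix C assume C: "C \<in> I"
    have "\<Phi> C \<in> gObj (Sym (full_sub G C))" using \<Phi> C by (auto simp: PiE_iff)
    hence "self_equiv (full_sub G C) (\<Phi> C)" by (simp only: subS_obj[OF C])
    thus "gfunctor (full_sub G C) (full_sub G C) (\<Phi> C)" by (rule gpdl.se_fun[OF sub_gpdl[OF C]])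
  qed
  show ?thesis unfolding ro_eq[OF Ko[OF \<Phi>]]
  proof (rule extensionalityI[of _ I])
    show "\<Phi> \<in> extensional I" using \<Phi> by (auto simp: PiE_iff)
  qed (auto simp: rf_gl[OF _ f])
qed

lemma r2: assumes u: "u \<in> gArr S" shows "glm (restr_m G u) = u"
proof -
  from u obtain F F' \<eta> where fe: "u = ((F, F'), \<eta>)" "self_equiv G F" "self_equiv G F'" "nat_trans G G F F' \<eta>" by (rule S_arrE)
  have rm: "restr_m G u = (\<lambda>C\<in>I. ((rf G C F, rf G C F'), restrict \<eta> C))"
    unfolding restr_m_def rf_def using u fe by simp
  have e1: "gl (\<lambda>C. fst (fst (restr_m G u C))) = F"
  proof -
    have "gl (\<lambda>C. fst (fst (restr_m G u C))) = gl (\<lambda>C. rf G C F)" unfolding rm by (rule gl_cong) simp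
    thus ?thesis using gl_rf fe by simp
  qed
  have e2: "gl (\<lambda>C. snd (fst (restr_m G u C))) = F'"
  proof -
    have "gl (\<lambda>C. snd (fst (restr_m G u C))) = gl (\<lambda>C. rf G C F')" unfolding rm by (rule gl_cong) simp
    thus ?thesis using gl_rf fe by simp
  qed
  have e3: "(\<lambda>a\<in>Ob. snd (restr_m G u (hcx a)) a) = \<eta>"
  proof (rule extensionalityI[of _ Ob])
    show "\<eta> \<in> extensional Ob" using nt_ext fe by blast
    fix a assume a: "a \<in> Ob"
    show "(\<lambda>a\<in>Ob. snd (restr_m G u (hcx a)) a) a = \<eta> a" using a homog_of[OF a] hcx_self[OF a] unfolding rm by simp
  qed simp
  show ?thesis unfolding glm_def e1 e2 e3 using fe by simp
qed

lemma r4: assumes w: "w \<in> gArr pr.P" shows "restr_m G (glm w) = w"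
proof -
  have g: "glm w \<in> gArr S" by (rule Ka[OF w])
  show ?thesis
  proof (rule extensionalityI[of _ I])
    show "restr_m G (glm w) \<in> extensional I" using g by (rule rm_ext)
    show "w \<in> extensional I" using w by (auto simp: PiE_iff)
    fix C assume C: "C \<in> I"
    interpret c: hcl G C by (rule hcl_C[OF C])
    have wC: "w C \<in> gArr c.h.S" using w C by (auto simp: PiE_iff)
    have W: "self_equiv c.H (fst (fst (w C)))" "self_equiv c.H (snd (fst (w C)))"
      "nat_trans c.H c.H (fst (fst (w C))) (snd (fst (w C))) (snd (w C))"
      using wC c.h.S_arr by blast+
    have fW: "\<And>C. C \<in> I \<Longrightarrow> gfunctor (full_sub G C) (full_sub G C) (fst (fst (w C)))"
         "\<And>C. C \<in> I \<Longrightarrow> gfunctor (full_sub G C) (full_sub G C) (snd (fst (w C)))"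
      using wP[OF w] gpdl.se_fun[OF sub_gpdl] by blast+
    have e3: "restrict (\<lambda>a\<in>Ob. snd (w (hcx a)) a) C = snd (w C)"
    proof (rule extensionalityI[of _ C])
      show "snd (w C) \<in> extensional C" using c.h.nt_ext[OF W(3)] by simp
      fix a assume a: "a \<in> C"
      show "restrict (\<lambda>a\<in>Ob. snd (w (hcx a)) a) C a = snd (w C) a" using a c.CO homog_mem[OF C a] by auto
    qed (rule restrict_extensional)
    show "restr_m G (glm w) C = w C"
      unfolding c.rm_C[OF g] unfolding glm_def fst_conv snd_conv e3
      using rf_gl[OF C fW(1)] rf_gl[OF C fW(2)] by (simp add: prod_eq_iff)
  qed
qed

lemma main: "\<exists>R2 R0. two_group_iso S pr.P (restr_o G, restr_m G) R2 R0"
proof -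
  define K where "K = (\<lambda>\<Phi>\<in>gObj pr.P. gl \<Phi>, \<lambda>w\<in>gArr pr.P. glm w)"
  have K1: "\<And>b. b \<in> gObj pr.P \<Longrightarrow> fst K b = gl b" unfolding K_def fst_conv by (rule restrict_apply')
  have K2: "\<And>b. b \<in> gArr pr.P \<Longrightarrow> snd K b = glm b" unfolding K_def snd_conv by (rule restrict_apply')
  have sF: "strict_mf S pr.P (restr_o G, restr_m G)" by (rule restr_strict)
  have Ke1: "fst K \<in> extensional (gObj pr.P)" unfolding K_def fst_conv by (rule restrict_extensional)
  have Ke2: "snd K \<in> extensional (gArr pr.P)" unfolding K_def snd_conv by (rule restrict_extensional)
  have Ko': "\<And>b. b \<in> gObj pr.P \<Longrightarrow> fst K b \<in> gObj S" using K1 Ko by metis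
  have Ka': "\<And>b. b \<in> gArr pr.P \<Longrightarrow> snd K b \<in> gArr S" using K2 Ka by metis
  have r1': "\<And>a. a \<in> gObj S \<Longrightarrow> fst K (fst (restr_o G, restr_m G) a) = a"
    unfolding fst_conv using K1 r1 ro_ob by metis
  have r2': "\<And>a. a \<in> gArr S \<Longrightarrow> snd K (snd (restr_o G, restr_m G) a) = a"
    unfolding snd_conv using K2 r2 rm_ar by metis
  have r3': "\<And>a. a \<in> gObj pr.P \<Longrightarrow> fst (restr_o G, restr_m G) (fst K a) = a"
    unfolding fst_conv using K1 r3 by metis
  have r4': "\<And>a. a \<in> gArr pr.P \<Longrightarrow> snd (restr_o G, restr_m G) (snd K a) = a"
    unfolding snd_conv using K2 r4 by metis
  have sK: "strict_mf pr.P S K"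
    by (rule strict_mf_inv[OF S_monoidal pr.P_monoidal sF Ke1 Ke2 Ko' Ka' r1' r2' r3' r4'])
  note mF = strict_mf_mf[OF S_monoidal pr.P_monoidal sF]
  note mK = strict_mf_mf[OF pr.P_monoidal S_monoidal sK]
  show ?thesis unfolding two_group_iso_def
    using S_two_group pr.P_two_group mF mK r1' r2' r3' r4' by (simp only: fst_conv snd_conv) blast
qed

end

theorem theorem4p10:
  fixes G :: "('o, 'm) gpd"
  assumes "groupoid G"
  shows "\<exists>R2 R0. two_group_iso (Sym G)
            (prod_mgpd (homog_components G) (\<lambda>C. Sym (full_sub G C)))
            (restr_o G, restr_m G) R2 R0"
  using gpdu.main[OF gpdu.intro[OF gpdl.intro[OF assms]]] .



end
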